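(* Let $G=(V,E)$ be a locally finite, connected, infinite graph, fix a vertex $x\in V$, and consider Bernoulli$(p)$ bond percolation on $G$. Then \[ p''_{\mathrm{cut,E}}=p'_{\mathrm{cut,E}}=p''_{\mathrm{cut,V}}=p'_{\mathrm{cut,V}}=p_{\mathrm{c}}. \]
   Context: Bernoulli$(p)$ bond percolation on $G$ keeps each edge independently as "open" with probability $p$ and otherwise declares it "closed"; $\mathbb{P}_p$ denotes its law. An open path is a path all of whose edges are open; $x\longleftrightarrow\infty$ is the event that the open cluster of $x$ has infinite diameter. The critical probability is $p_{\mathrm{c}}=\sup\{p\ge 0:\mathbb{P}_p(x\longleftrightarrow\infty)=0\}$. A vertex cutset separating $x$ from infinity is a set $\Pi\subset V$ such that the connected component of $x$ in the graph obtained from $G$ by deleting the vertices of $\Pi$ is finite; an edge cutset separating $x$ from infinity is a set $\Pi_E\subset E$ such that the connected component of $x$ in $G$ with the edges of $\Pi_E$ deleted is finite. For a vertex cutset $\Pi$ and $v\in\Pi$, $A(x,v,\Pi)$ is the event that $x$ is connected to $v$ by an open path that uses no vertex of $\Pi\setminus\{v\}$. For an edge cutset $\Pi_E$ and $e\in\Pi_E$, $A(x,e,\Pi_E)$ is the event that $e$ is open and $x$ is connected to $e$ by an open path that uses no edge of $\Pi_E\setminus\{e\}$. For a set $K\subset V$: its outer vertex boundary is $\partial_V K=\{z\notin K:\exists y\in K,\ y\sim z\}$ and its edge boundary is $\Delta K=\{(y,z)\in E: y\in K, z\notin K\}$. Let $\mathscr{B}_E=\{\Delta S: S\text{ is the vertex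 set of a finite connected subgraph containing }x\}$ (boundary edge cutsets) and $\mathscr{B}_V=\{\partial_V S: S\text{ is the vertex set of a finite connected subgraph containing }x\}$ (boundary vertex cutsets). Define $p'_{\mathrm{cut,V}}=\sup\{p\ge0:\inf_{\Pi}\sum_{v\in\Pi}\mathbb{P}_p[A(x,v,\Pi)]=0\}$ (infimum over all vertex cutsets separating $x$ from infinity), $p'_{\mathrm{cut,E}}=\sup\{p\ge0:\inf_{\Pi_E}\sum_{e\in\Pi_E}\mathbb{P}_p[A(x,e,\Pi_E)]=0\}$ (infimum over all edge cutsets separating $x$ from infinity), $p''_{\mathrm{cut,V}}=\sup\{p\ge0:\inf_{\Pi\in\mathscr{B}_V}\sum_{v\in\Pi}\mathbb{P}_p[A(x,v,\Pi)]=0\}$ and $p''_{\mathrm{cut,E}}=\sup\{p\ge0:\inf_{\Pi_E\in\mathscr{B}_E}\sum_{e\in\Pi_E}\mathbb{P}_p[A(x,e,\Pi_E)]=0\}$. *)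

theory Defs
  imports "HOL-Probability.Probability"
begin

definition simple_graph :: "'v set \<Rightarrow> 'v set set \<Rightarrow> bool" where
  "simple_graph V E \<longleftrightarrow> (\<forall>e\<in>E. \<exists>a b. a \<noteq> b \<and> a \<in> V \<and> b \<in> V \<and> e = {a, b})"

definition walk :: "'v set \<Rightarrow> 'v set set \<Rightarrow> 'v list \<Rightarrow> bool" where
  "walk V F xs \<longleftrightarrow> xs \<noteq> [] \<and> set xs \<subseteq> V \<and> successively (\<lambda>a b. {a, b} \<in> F) xs"

definition walk_edges :: "'v list \<Rightarrow> 'v set set" where
  "walk_edges xs = set (map (\<lambda>(a, b). {a, b}) (zip xs (tl xs)))"

definition connected_graph :: "'v set \<Rightarrow> 'v set set \<Rightarrow> bool" where
  "connected_graph V E \<longleftrightarrow>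
     (\<forall>u\<in>V. \<forall>v\<in>V. \<exists>xs. walk V E xs \<and> hd xs = u \<and> last xs = v)"

definition locally_finite :: "'v set \<Rightarrow> 'v set set \<Rightarrow> bool" where
  "locally_finite V E \<longleftrightarrow> (\<forall>v\<in>V. finite {e\<in>E. v \<in> e})"

text \<open>Bernoulli(p) bond percolation: product of Bernoulli(p) over the edges.
  A configuration \<omega> declares edge e open iff \<omega> e.\<close>

definition perc :: "'v set set \<Rightarrow> real \<Rightarrow> ('v set \<Rightarrow> bool) measure" where
  "perc E p = PiM E (\<lambda>_. measure_pmf (bernoulli_pmf p))"

definition Prob :: "'v set set \<Rightarrow> real \<Rightarrow> (('v set \<Rightarrow> bool) \<Rightarrow> bool) \<Rightarrow> real" where
  "Prob E p P = measure (perc E p) {\<omega> \<in> space (perc E p). P \<omega>}"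

definition open_walk :: "'v set \<Rightarrow> 'v set set \<Rightarrow> ('v set \<Rightarrow> bool) \<Rightarrow> 'v list \<Rightarrow> bool" where
  "open_walk V E \<omega> xs \<longleftrightarrow> walk V E xs \<and> (\<forall>e\<in>walk_edges xs. \<omega> e)"

definition cluster :: "'v set \<Rightarrow> 'v set set \<Rightarrow> ('v set \<Rightarrow> bool) \<Rightarrow> 'v \<Rightarrow> 'v set" where
  "cluster V E \<omega> x = {y. \<exists>xs. open_walk V E \<omega> xs \<and> hd xs = x \<and> last xs = y}"

text \<open>x \<longleftrightarrow> \<infinity>: the open cluster of x has infinite diameter (w.r.t. the graph distance of G),
  i.e. it contains vertices at arbitrarily large graph distance from x.\<close>
definition conn_inf :: "'v set \<Rightarrow> 'v set set \<Rightarrow> 'v \<Rightarrow> ('v set \<Rightarrow> bool) \<Rightarrow> bool" where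
  "conn_inf V E x \<omega> \<longleftrightarrow>
     (\<forall>n::nat. \<exists>y\<in>cluster V E \<omega> x.
        \<not> (\<exists>xs. walk V E xs \<and> hd xs = x \<and> last xs = y \<and> length xs \<le> Suc n))"

definition p_c :: "'v set \<Rightarrow> 'v set set \<Rightarrow> 'v \<Rightarrow> real" where
  "p_c V E x = Sup {p. 0 \<le> p \<and> Prob E p (conn_inf V E x) = 0}"

definition vertex_cutset :: "'v set \<Rightarrow> 'v set set \<Rightarrow> 'v \<Rightarrow> 'v set \<Rightarrow> bool" where
  "vertex_cutset V E x C \<longleftrightarrow> C \<subseteq> V \<and>
     finite {y. \<exists>xs. walk V E xs \<and> hd xs = x \<and> last xs = y \<and> set xs \<inter> C = {}}"

definition edge_cutset :: "'v set \<Rightarrow> 'v set set \<Rightarrow> 'v \<Rightarrow> 'v set set \<Rightarrow> bool" where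
  "edge_cutset V E x C \<longleftrightarrow> C \<subseteq> E \<and>
     finite {y. \<exists>xs. walk V (E - C) xs \<and> hd xs = x \<and> last xs = y}"

definition A_vertex :: "'v set \<Rightarrow> 'v set set \<Rightarrow> 'v \<Rightarrow> 'v \<Rightarrow> 'v set \<Rightarrow> ('v set \<Rightarrow> bool) \<Rightarrow> bool" where
  "A_vertex V E x v C \<omega> \<longleftrightarrow>
     (\<exists>xs. open_walk V E \<omega> xs \<and> hd xs = x \<and> last xs = v \<and> set xs \<inter> (C - {v}) = {})"

definition A_edge :: "'v set \<Rightarrow> 'v set set \<Rightarrow> 'v \<Rightarrow> 'v set \<Rightarrow> 'v set set \<Rightarrow> ('v set \<Rightarrow> bool) \<Rightarrow> bool" where
  "A_edge V E x e C \<omega> \<longleftrightarrow> \<omega> e \<and>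
     (\<exists>xs. open_walk V E \<omega> xs \<and> hd xs = x \<and> last xs \<in> e \<and> walk_edges xs \<inter> (C - {e}) = {})"

text \<open>(Possibly infinite) sums of nonnegative terms, valued in [0,\<infinity>].\<close>

definition vsum :: "'v set \<Rightarrow> 'v set set \<Rightarrow> 'v \<Rightarrow> real \<Rightarrow> 'v set \<Rightarrow> ennreal" where
  "vsum V E x p C = (\<integral>\<^sup>+ v. ennreal (Prob E p (A_vertex V E x v C)) \<partial>count_space C)"

definition esum :: "'v set \<Rightarrow> 'v set set \<Rightarrow> 'v \<Rightarrow> real \<Rightarrow> 'v set set \<Rightarrow> ennreal" where
  "esum V E x p C = (\<integral>\<^sup>+ e. ennreal (Prob E p (A_edge V E x e C)) \<partial>count_space C)"

definition conn_set :: "'v set \<Rightarrow> 'v set set \<Rightarrow> 'v \<Rightarrow> 'v set \<Rightarrow> bool" where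
  "conn_set V E x S \<longleftrightarrow> finite S \<and> x \<in> S \<and> S \<subseteq> V \<and>
     (\<forall>u\<in>S. \<forall>v\<in>S. \<exists>xs. walk S E xs \<and> hd xs = u \<and> last xs = v)"

definition vboundary :: "'v set \<Rightarrow> 'v set set \<Rightarrow> 'v set \<Rightarrow> 'v set" where
  "vboundary V E K = {z\<in>V. z \<notin> K \<and> (\<exists>y\<in>K. {y, z} \<in> E)}"

definition eboundary :: "'v set set \<Rightarrow> 'v set \<Rightarrow> 'v set set" where
  "eboundary E K = {e\<in>E. \<exists>y z. e = {y, z} \<and> y \<in> K \<and> z \<notin> K}"

definition B_V :: "'v set \<Rightarrow> 'v set set \<Rightarrow> 'v \<Rightarrow> 'v set set" where
  "B_V V E x = {vboundary V E S | S. conn_set V E x S}"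

definition B_E :: "'v set \<Rightarrow> 'v set set \<Rightarrow> 'v \<Rightarrow> 'v set set set" where
  "B_E V E x = {eboundary E S | S. conn_set V E x S}"

definition p'_cut_V :: "'v set \<Rightarrow> 'v set set \<Rightarrow> 'v \<Rightarrow> real" where
  "p'_cut_V V E x = Sup {p. 0 \<le> p \<and> (INF C\<in>{C. vertex_cutset V E x C}. vsum V E x p C) = 0}"

definition p'_cut_E :: "'v set \<Rightarrow> 'v set set \<Rightarrow> 'v \<Rightarrow> real" where
  "p'_cut_E V E x = Sup {p. 0 \<le> p \<and> (INF C\<in>{C. edge_cutset V E x C}. esum V E x p C) = 0}"

definition p''_cut_V :: "'v set \<Rightarrow> 'v set set \<Rightarrow> 'v \<Rightarrow> real" where
  "p''_cut_V V E x = Sup {p. 0 \<le> p \<and> (INF C\<in>B_V V E x. vsum V E x p C) = 0}"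

definition p''_cut_E :: "'v set \<Rightarrow> 'v set set \<Rightarrow> 'v \<Rightarrow> real" where
  "p''_cut_E V E x = Sup {p. 0 \<le> p \<and> (INF C\<in>B_E V E x. esum V E x p C) = 0}"

end

theory Submission
  imports Defs
begin

inductive cn :: "'v set \<Rightarrow> 'v set set \<Rightarrow> 'v \<Rightarrow> 'v \<Rightarrow> bool" for W Es where
  cn_refl: "a \<in> W \<Longrightarrow> cn W Es a a"
| cn_step: "{a,b} \<in> Es \<Longrightarrow> a \<in> W \<Longrightarrow> cn W Es b c \<Longrightarrow> cn W Es a c"

lemma walk_edges_Cons2: "walk_edges (a # b # xs) = insert {a,b} (walk_edges (b # xs))"
  by (simp add: walk_edges_def)

lemma walk_edges_single[simp]: "walk_edges [a] = {}"
  by (simp add: walk_edges_def)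

lemma walk_iff: "walk W F xs \<longleftrightarrow> xs \<noteq> [] \<and> set xs \<subseteq> W \<and> walk_edges xs \<subseteq> F"
proof (induction xs)
  case Nil then show ?case by (simp add: walk_def)
next
  case (Cons a xs)
  show ?case
  proof (cases xs)
    case Nil then show ?thesis by (simp add: walk_def)
  next
    case (Cons b ys)
    have "walk W F (a # b # ys) \<longleftrightarrow> a \<in> W \<and> {a,b} \<in> F \<and> walk W F (b # ys)"
      by (auto simp: walk_def)
    then show ?thesis using Cons.IH Cons by (auto simp: walk_edges_Cons2)
  qed
qed

lemma cn_W: "cn W F a b \<Longrightarrow> a \<in> W \<and> b \<in> W"
  by (induction rule: cn.induct) auto

lemma cn_walk: "cn W F a b \<longleftrightarrow> (\<exists>xs. walk W F xs \<and> hd xs = a \<and> last xs = b)"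
proof
  assume "cn W F a b"
  then show "\<exists>xs. walk W F xs \<and> hd xs = a \<and> last xs = b"
  proof (induction rule: cn.induct)
    case (cn_refl a) then show ?case by (intro exI[of _ "[a]"]) (simp add: walk_iff)
  next
    case (cn_step a b c)
    then obtain xs where xs: "walk W F xs" "hd xs = b" "last xs = c" by blast
    then obtain ys where ys: "xs = b # ys" by (cases xs) (auto simp: walk_iff)
    show ?case using cn_step xs ys
      by (intro exI[of _ "a # xs"]) (auto simp: walk_iff walk_edges_Cons2)
  qed
next
  assume "\<exists>xs. walk W F xs \<and> hd xs = a \<and> last xs = b"
  then obtain xs where "walk W F xs" "hd xs = a" "last xs = b" by blast
  then show "cn W F a b"
  proof (induction xs arbitrary: a)
    case Nil then show ?case by (simp add: walk_iff)
  next
    case (Cons c xs)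
    show ?case
    proof (cases xs)
      case Nil then show ?thesis using Cons by (auto simp: walk_iff intro: cn_refl)
    next
      case (Cons d ys)
      then show ?thesis using Cons.prems Cons.IH[of d]
        by (auto simp: walk_iff walk_edges_Cons2 intro: cn_step)
    qed
  qed
qed

lemma cn_trans: "cn W F a b \<Longrightarrow> cn W F b c \<Longrightarrow> cn W F a c"
  by (induction rule: cn.induct) (auto intro: cn_step)

lemma cn_snoc: "cn W F a b \<Longrightarrow> {b,c} \<in> F \<Longrightarrow> c \<in> W \<Longrightarrow> cn W F a c"
  by (rule cn_trans, assumption, rule cn_step[of b c], auto intro: cn_refl dest: cn_W)

lemma cn_sym: "cn W F a b \<Longrightarrow> cn W F b a"
proof (induction rule: cn.induct)
  case (cn_refl a) then show ?case by (rule cn.cn_refl)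
next
  case (cn_step a b c)
  then show ?case by (auto intro: cn_snoc simp: insert_commute)
qed

lemma cn_mono: "cn W F a b \<Longrightarrow> W \<subseteq> W' \<Longrightarrow> F \<subseteq> F' \<Longrightarrow> cn W' F' a b"
  by (induction rule: cn.induct) (auto intro: cn.intros)

lemma cn_insert:
  "cn W (insert e F) u w \<Longrightarrow> cn W F u w \<or> (\<exists>a b. e = {a,b} \<and> cn W F u a \<and> cn W F b w)"
proof (induction rule: cn.induct)
  case (cn_refl a) then show ?case by (auto intro: cn.intros)
next
  case (cn_step u b' w)
  from cn_step.IH show ?case
  proof
    assume h: "cn W F b' w"
    show ?thesis
    proof (cases "{u,b'} \<in> F")
      case True then show ?thesis using h cn_step by (auto intro: cn.intros)
    next
      case False then have "e = {u,b'}" using cn_step by auto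
      then show ?thesis using h cn_step by (auto intro: cn.intros)
    qed
  next
    assume "\<exists>a b. e = {a, b} \<and> cn W F b' a \<and> cn W F b w"
    then obtain a b where h: "e = {a,b}" "cn W F b' a" "cn W F b w" by blast
    show ?thesis
    proof (cases "{u,b'} \<in> F")
      case True then show ?thesis using h cn_step by (auto intro: cn.intros)
    next
      case False then have "{u,b'} = {a,b}" using cn_step h by auto
      then have "u = a \<or> u = b" by (auto simp: doubleton_eq_iff)
      then show ?thesis using h cn_step by (auto intro: cn.intros)
    qed
  qed
qed

locale pg =
  fixes V :: "'v set" and E :: "'v set set" and x :: 'v
  assumes sg: "simple_graph V E" and lf: "locally_finite V E"
    and cg: "connected_graph V E" and infV: "infinite V" and xV: "x \<in> V"
begin

lemma edgeE: "e \<in> E \<Longrightarrow> (\<And>a b. a \<noteq> b \<Longrightarrow> a \<in> V \<Longrightarrow> b \<in> V \<Longrightarrow> e = {a,b} \<Longrightarrow> P) \<Longrightarrow> P"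
  using sg unfolding simple_graph_def by blast

lemma edge_V: "{a,b} \<in> E \<Longrightarrow> a \<in> V \<and> b \<in> V"
  by (erule edgeE) (auto simp: doubleton_eq_iff)

lemma edge_finite: "e \<in> E \<Longrightarrow> finite e"
  by (erule edgeE) auto

definition Bl :: "nat \<Rightarrow> 'v set" where
  "Bl n = {y. \<exists>xs. walk V E xs \<and> hd xs = x \<and> last xs = y \<and> length xs \<le> Suc n}"

definition ES :: "'v set \<Rightarrow> 'v set set" where
  "ES S = {e \<in> E. e \<subseteq> S}"

lemma x_Bl: "x \<in> Bl n"
  unfolding Bl_def using xV by (intro CollectI exI[of _ "[x]"]) (auto simp: walk_iff)

lemma Bl_V: "Bl n \<subseteq> V"
  unfolding Bl_def walk_iff by auto

lemma Bl_mono: "m \<le> n \<Longrightarrow> Bl m \<subseteq> Bl n"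
proof
  fix y assume "m \<le> n" "y \<in> Bl m"
  then obtain xs where "walk V E xs" "hd xs = x" "last xs = y" "length xs \<le> Suc m"
    unfolding Bl_def by blast
  then show "y \<in> Bl n" unfolding Bl_def using \<open>m \<le> n\<close> by (intro CollectI exI[of _ xs]) auto
qed

lemma walk_edges_snoc: "xs \<noteq> [] \<Longrightarrow> walk_edges (xs @ [z]) = insert {last xs, z} (walk_edges xs)"
proof (induction xs)
  case Nil then show ?case by simp
next
  case (Cons a xs)
  then show ?case by (cases xs) (auto simp: walk_edges_Cons2)
qed

lemma Bl_step: "y \<in> Bl n \<Longrightarrow> {y,z} \<in> E \<Longrightarrow> z \<in> Bl (Suc n)"
proof -
  assume "y \<in> Bl n" "{y,z} \<in> E"
  then obtain xs where xs: "walk V E xs" "hd xs = x" "last xs = y" "length xs \<le> Suc n"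
    unfolding Bl_def by blast
  have "z \<in> V" using edge_V[OF \<open>{y,z} \<in> E\<close>] by auto
  then show ?thesis unfolding Bl_def using xs \<open>{y,z} \<in> E\<close>
    by (intro CollectI exI[of _ "xs @ [z]"]) (auto simp: walk_iff walk_edges_snoc)
qed

lemma Bl_Suc_sub: "Bl (Suc n) \<subseteq> Bl n \<union> {z. \<exists>y\<in>Bl n. {y,z} \<in> E}"
proof
  fix z assume "z \<in> Bl (Suc n)"
  then obtain xs where xs: "walk V E xs" "hd xs = x" "last xs = z" "length xs \<le> Suc (Suc n)"
    unfolding Bl_def by blast
  show "z \<in> Bl n \<union> {z. \<exists>y\<in>Bl n. {y,z} \<in> E}"
  proof (cases "length xs \<le> Suc n")
    case True then show ?thesis using xs unfolding Bl_def by blast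
  next
    case False
    then obtain ys w where ys: "xs = ys @ [w]" by (cases xs rule: rev_exhaust) auto
    with False have "ys \<noteq> []" by auto
    then have "walk V E ys" "hd ys = x" "{last ys, z} \<in> E"
      using xs ys by (auto simp: walk_iff walk_edges_snoc)
    moreover have "length ys \<le> Suc n" using xs ys by auto
    ultimately have "last ys \<in> Bl n" "{last ys, z} \<in> E" unfolding Bl_def by blast+
    then show ?thesis by blast
  qed
qed

lemma nbr_finite: "finite B \<Longrightarrow> B \<subseteq> V \<Longrightarrow> finite {z. \<exists>y\<in>B. {y,z} \<in> E}"
proof -
  assume B: "finite B" "B \<subseteq> V"
  have "{z. \<exists>y\<in>B. {y,z} \<in> E} \<subseteq> \<Union>(\<Union>y\<in>B. {e\<in>E. y \<in> e})" by blast
  moreover have "finite (\<Union>(\<Union>y\<in>B. {e\<in>E. y \<in> e}))"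
  proof (rule finite_Union)
    show "finite (\<Union>y\<in>B. {e\<in>E. y \<in> e})"
      using B lf unfolding locally_finite_def by blast
    show "\<And>M. M \<in> (\<Union>y\<in>B. {e\<in>E. y \<in> e}) \<Longrightarrow> finite M" using edge_finite by blast
  qed
  ultimately show ?thesis by (rule finite_subset)
qed

lemma Bl_finite: "finite (Bl n)"
proof (induction n)
  case 0
  have "Bl 0 \<subseteq> {x}"
  proof
    fix y assume "y \<in> Bl 0"
    then obtain xs where "walk V E xs" "hd xs = x" "last xs = y" "length xs \<le> Suc 0"
      unfolding Bl_def by blast
    then show "y \<in> {x}" by (cases xs) (auto simp: walk_iff)
  qed
  then show ?case by (rule finite_subset) simp
next
  case (Suc n)
  show ?case by (rule finite_subset[OF Bl_Suc_sub]) (use Suc Bl_V nbr_finite in auto)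
qed

lemma cn_V_E: "y \<in> V \<Longrightarrow> cn V E x y"
  using cg xV unfolding connected_graph_def cn_walk by blast

lemma in_some_Bl: "y \<in> V \<Longrightarrow> \<exists>n. y \<in> Bl n"
proof -
  assume "y \<in> V"
  then obtain xs where "walk V E xs" "hd xs = x" "last xs = y"
    using cn_V_E cn_walk by metis
  then show ?thesis unfolding Bl_def by (intro exI[of _ "length xs"]) auto
qed

lemma finite_in_Bl: "finite K \<Longrightarrow> K \<subseteq> V \<Longrightarrow> \<exists>n. K \<subseteq> Bl n"
proof (induction K rule: finite_induct)
  case empty then show ?case by auto
next
  case (insert y K)
  then obtain n where "K \<subseteq> Bl n" by auto
  moreover obtain m where "y \<in> Bl m" using insert(4) in_some_Bl by blast
  ultimately show ?case using Bl_mono[of n "max n m"] Bl_mono[of m "max n m"]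
    by (intro exI[of _ "max n m"]) auto
qed

lemma far_vertex: "\<exists>y\<in>V. y \<notin> Bl n"
proof (rule ccontr)
  assume "\<not> (\<exists>y\<in>V. y \<notin> Bl n)"
  then have "V \<subseteq> Bl n" by blast
  then show False using infV Bl_finite[of n] finite_subset by blast
qed

lemma ES_finite: "finite S \<Longrightarrow> finite (ES S)"
  unfolding ES_def by (rule finite_subset[of _ "Pow S"]) auto

lemma ES_sub: "ES S \<subseteq> E" unfolding ES_def by auto

lemma countable_V: "countable V"
proof -
  have "V = (\<Union>n. Bl n)" using in_some_Bl Bl_V by blast
  moreover have "countable (\<Union>n. Bl n)" by (rule countable_UN) (auto intro: countable_finite Bl_finite)
  ultimately show ?thesis by simp
qed

lemma countable_E: "countable E"
proof -
  have "E \<subseteq> (\<Union>n. ES (Bl n))"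
  proof
    fix e assume "e \<in> E"
    then obtain a b where ab: "a \<in> V" "b \<in> V" "e = {a,b}" by (rule edgeE)
    then obtain n m where "a \<in> Bl n" "b \<in> Bl m" using in_some_Bl by blast
    then have "e \<subseteq> Bl (max n m)" using ab Bl_mono[of n "max n m"] Bl_mono[of m "max n m"] by auto
    then show "e \<in> (\<Union>n. ES (Bl n))" using \<open>e \<in> E\<close> unfolding ES_def by blast
  qed
  moreover have "countable (\<Union>n. ES (Bl n))"
    by (rule countable_UN) (auto intro: countable_finite Bl_finite ES_finite)
  ultimately show ?thesis by (rule countable_subset)
qed

lemma cn_prefix:
  assumes "cn V F a y" "a \<in> Bl (Suc n)" "y \<notin> Bl n" "F \<subseteq> E"
  shows "\<exists>y'. y' \<notin> Bl n \<and> cn V (F \<inter> ES (Bl (Suc n))) a y'"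
  using assms
proof (induction rule: cn.induct)
  case (cn_refl a) then show ?case by (auto intro: cn.intros)
next
  case (cn_step a b c)
  show ?case
  proof (cases "a \<in> Bl n")
    case False then show ?thesis using cn_step by (auto intro: cn.intros)
  next
    case True
    have "{a,b} \<in> E" using cn_step by auto
    then have b: "b \<in> Bl (Suc n)" using Bl_step True by blast
    then obtain y' where "y' \<notin> Bl n" "cn V (F \<inter> ES (Bl (Suc n))) b y'" using cn_step by blast
    moreover have "{a,b} \<in> F \<inter> ES (Bl (Suc n))"
      using cn_step b Bl_mono[of n "Suc n"] True \<open>{a,b} \<in> E\<close> unfolding ES_def by auto
    ultimately show ?thesis using cn_step by (auto intro: cn.intros)
  qed
qed

end

definition wt :: "'e set \<Rightarrow> real \<Rightarrow> 'e set \<Rightarrow> real" where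
  "wt F r A = r ^ card A * (1 - r) ^ card (F - A)"

definition PF :: "'e set \<Rightarrow> real \<Rightarrow> ('e set \<Rightarrow> bool) \<Rightarrow> real" where
  "PF F r Q = (\<Sum>A\<in>Pow F. if Q A then wt F r A else 0)"

lemma PF_cong: "(\<And>A. A \<subseteq> F \<Longrightarrow> Q A = Q' A) \<Longrightarrow> PF F r Q = PF F r Q'"
  unfolding PF_def by (rule sum.cong) auto

lemma wt_nonneg: "0 \<le> r \<Longrightarrow> r \<le> 1 \<Longrightarrow> 0 \<le> wt F r A"
  unfolding wt_def by simp

lemma PF_nonneg: "0 \<le> r \<Longrightarrow> r \<le> 1 \<Longrightarrow> 0 \<le> PF F r Q"
  unfolding PF_def by (rule sum_nonneg) (auto simp: wt_nonneg)

lemma PF_mono: "0 \<le> r \<Longrightarrow> r \<le> 1 \<Longrightarrow> (\<And>A. A \<subseteq> F \<Longrightarrow> Q A \<Longrightarrow> Q' A) \<Longrightarrow> PF F r Q \<le> PF F r Q'"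
  unfolding PF_def by (rule sum_mono) (auto simp: wt_nonneg)

lemma PF_split: "PF F r Q = PF F r (\<lambda>A. Q A \<and> P A) + PF F r (\<lambda>A. Q A \<and> \<not> P A)"
  unfolding PF_def by (subst sum.distrib[symmetric]) (rule sum.cong, auto)

lemma PF_empty: "PF {} r Q = (if Q {} then 1 else 0)"
  unfolding PF_def wt_def by simp

lemma PF_insert:
  assumes "finite F" "e \<notin> F"
  shows "PF (insert e F) r Q = r * PF F r (\<lambda>A. Q (insert e A)) + (1 - r) * PF F r Q"
proof -
  have dis: "Pow F \<inter> insert e ` Pow F = {}" using assms by auto
  have inj: "inj_on (insert e) (Pow F)"
    by (intro inj_onI) (metis PowD assms(2) insert_ident subsetD)
  have w1: "A \<in> Pow F \<Longrightarrow> wt (insert e F) r (insert e A) = r * wt F r A" for A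
  proof -
    assume A: "A \<in> Pow F"
    then have "finite A" "e \<notin> A" using assms finite_subset by auto
    moreover have "insert e F - insert e A = F - A" using assms A by auto
    ultimately show ?thesis unfolding wt_def by simp
  qed
  have w2: "A \<in> Pow F \<Longrightarrow> wt (insert e F) r A = (1 - r) * wt F r A" for A
  proof -
    assume A: "A \<in> Pow F"
    then have "insert e F - A = insert e (F - A)" "e \<notin> F - A" using assms by auto
    moreover have "finite (F - A)" using assms by auto
    ultimately show ?thesis unfolding wt_def by simp
  qed
  have "PF (insert e F) r Q = (\<Sum>A\<in>Pow F. if Q A then wt (insert e F) r A else 0)
      + (\<Sum>A\<in>insert e ` Pow F. if Q A then wt (insert e F) r A else 0)"
    unfolding PF_def Pow_insert using assms dis by (intro sum.union_disjoint) auto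
  also have "(\<Sum>A\<in>insert e ` Pow F. if Q A then wt (insert e F) r A else 0)
      = (\<Sum>A\<in>Pow F. if Q (insert e A) then wt (insert e F) r (insert e A) else 0)"
    by (subst sum.reindex[OF inj]) simp
  also have "\<dots> = r * PF F r (\<lambda>A. Q (insert e A))"
    unfolding PF_def sum_distrib_left by (rule sum.cong) (auto simp: w1)
  also have "(\<Sum>A\<in>Pow F. if Q A then wt (insert e F) r A else 0) = (1 - r) * PF F r Q"
    unfolding PF_def sum_distrib_left by (rule sum.cong) (auto simp: w2)
  finally show ?thesis by simp
qed

lemma PF_True: "finite F \<Longrightarrow> PF F r (\<lambda>_. True) = 1"
proof (induction F rule: finite_induct)
  case empty then show ?case by (simp add: PF_empty)
next
  case (insert e F) then show ?case by (simp add: PF_insert algebra_simps)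
qed

lemma PF_not: "finite F \<Longrightarrow> PF F r (\<lambda>A. \<not> Q A) = 1 - PF F r Q"
  using PF_split[of F r "\<lambda>_. True" Q] PF_True[of F r] by simp

lemma PF_le1: "finite F \<Longrightarrow> 0 \<le> r \<Longrightarrow> r \<le> 1 \<Longrightarrow> PF F r Q \<le> 1"
  using PF_mono[of r F Q "\<lambda>_. True"] PF_True[of F r] by simp

lemma PF_const: "finite F \<Longrightarrow> PF F r (\<lambda>_. P) = (if P then 1 else 0)"
  using PF_True[of F r] by (cases P) (simp_all add: PF_def)

lemma PF_factor:
  assumes "finite F1" "finite F2" "F1 \<inter> F2 = {}"
  shows "PF (F1 \<union> F2) r (\<lambda>A. Q1 (A \<inter> F1) \<and> Q2 (A \<inter> F2)) = PF F1 r Q1 * PF F2 r Q2"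
  using assms
proof (induction F1 arbitrary: Q1 rule: finite_induct)
  case empty
  have "PF ({} \<union> F2) r (\<lambda>A. Q1 (A \<inter> {}) \<and> Q2 (A \<inter> F2)) = PF F2 r (\<lambda>A. Q1 {} \<and> Q2 A)"
    by (simp, rule PF_cong) (auto simp: Int_absorb2)
  also have "\<dots> = PF {} r Q1 * PF F2 r Q2"
    by (cases "Q1 {}") (simp_all add: PF_empty PF_def wt_def)
  finally show ?case .
next
  case (insert e F1)
  have eF: "e \<notin> F1 \<union> F2" using insert by auto
  have "PF (insert e F1 \<union> F2) r (\<lambda>A. Q1 (A \<inter> insert e F1) \<and> Q2 (A \<inter> F2))
     = r * PF (F1 \<union> F2) r (\<lambda>A. Q1 (insert e A \<inter> insert e F1) \<and> Q2 (insert e A \<inter> F2))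
       + (1 - r) * PF (F1 \<union> F2) r (\<lambda>A. Q1 (A \<inter> insert e F1) \<and> Q2 (A \<inter> F2))"
    using PF_insert[OF _ eF] insert by simp
  also have "PF (F1 \<union> F2) r (\<lambda>A. Q1 (insert e A \<inter> insert e F1) \<and> Q2 (insert e A \<inter> F2))
      = PF (F1 \<union> F2) r (\<lambda>A. (\<lambda>B. Q1 (insert e B)) (A \<inter> F1) \<and> Q2 (A \<inter> F2))"
  proof (rule PF_cong)
    fix A assume "A \<subseteq> F1 \<union> F2"
    then have "insert e A \<inter> insert e F1 = insert e (A \<inter> F1)" "insert e A \<inter> F2 = A \<inter> F2"
      using insert by auto
    then show "(Q1 (insert e A \<inter> insert e F1) \<and> Q2 (insert e A \<inter> F2)) =
      ((\<lambda>B. Q1 (insert e B)) (A \<inter> F1) \<and> Q2 (A \<inter> F2))" by simp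
  qed
  also have "\<dots> = PF F1 r (\<lambda>B. Q1 (insert e B)) * PF F2 r Q2" using insert by (intro insert.IH) auto
  also have "PF (F1 \<union> F2) r (\<lambda>A. Q1 (A \<inter> insert e F1) \<and> Q2 (A \<inter> F2))
      = PF (F1 \<union> F2) r (\<lambda>A. Q1 (A \<inter> F1) \<and> Q2 (A \<inter> F2))"
    using insert by (intro PF_cong) (auto simp: Int_insert_right)
  also have "\<dots> = PF F1 r Q1 * PF F2 r Q2" using insert by (intro insert.IH) auto
  finally have "PF (insert e F1 \<union> F2) r (\<lambda>A. Q1 (A \<inter> insert e F1) \<and> Q2 (A \<inter> F2))
     = (r * PF F1 r (\<lambda>B. Q1 (insert e B)) + (1 - r) * PF F1 r Q1) * PF F2 r Q2"
    by (simp add: algebra_simps)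
  then show ?case using PF_insert[of F1 e r Q1] insert(1,2) by simp
qed

lemma PF_marg:
  assumes "finite F" "F' \<subseteq> F"
  shows "PF F r (\<lambda>A. Q (A \<inter> F')) = PF F' r Q"
proof -
  have eq: "F = F' \<union> (F - F')" using assms by auto
  have "PF F r (\<lambda>A. Q (A \<inter> F')) = PF (F' \<union> (F - F')) r (\<lambda>A. Q (A \<inter> F') \<and> (\<lambda>_. True) (A \<inter> (F - F')))"
    using eq by simp
  also have "\<dots> = PF F' r Q * PF (F - F') r (\<lambda>_. True)"
    using assms by (intro PF_factor) (auto intro: finite_subset)
  finally show ?thesis using assms by (simp add: PF_True)
qed

lemma PF_partition:
  assumes "finite T" "\<And>A. A \<subseteq> F \<Longrightarrow> f A \<in> T"
  shows "PF F r Q = (\<Sum>s\<in>T. PF F r (\<lambda>A. f A = s \<and> Q A))"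
proof -
  have "PF F r Q = (\<Sum>A\<in>Pow F. \<Sum>s\<in>T. if f A = s \<and> Q A then wt F r A else 0)"
    unfolding PF_def
  proof (rule sum.cong[OF refl])
    fix A assume "A \<in> Pow F"
    then have "f A \<in> T" using assms by auto
    then show "(if Q A then wt F r A else 0) = (\<Sum>s\<in>T. if f A = s \<and> Q A then wt F r A else 0)"
      using assms(1) by (simp add: if_distrib[symmetric] sum.delta)
  qed
  also have "\<dots> = (\<Sum>s\<in>T. PF F r (\<lambda>A. f A = s \<and> Q A))"
    unfolding PF_def by (rule sum.swap)
  finally show ?thesis .
qed

definition DPF :: "'e set \<Rightarrow> real \<Rightarrow> ('e set \<Rightarrow> bool) \<Rightarrow> real" where
  "DPF F r Q = (\<Sum>e\<in>F. PF (F - {e}) r (\<lambda>A. Q (insert e A)) - PF (F - {e}) r Q)"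

lemma DPF_insert:
  assumes "finite F" "e \<notin> F"
  shows "DPF (insert e F) r Q = (PF F r (\<lambda>A. Q (insert e A)) - PF F r Q)
     + r * DPF F r (\<lambda>A. Q (insert e A)) + (1 - r) * DPF F r Q"
proof -
  have "DPF (insert e F) r Q = (PF F r (\<lambda>A. Q (insert e A)) - PF F r Q)
      + (\<Sum>e'\<in>F. PF (insert e F - {e'}) r (\<lambda>A. Q (insert e' A)) - PF (insert e F - {e'}) r Q)"
    unfolding DPF_def using assms by (simp add: sum.insert)
  also have "(\<Sum>e'\<in>F. PF (insert e F - {e'}) r (\<lambda>A. Q (insert e' A)) - PF (insert e F - {e'}) r Q)
     = (\<Sum>e'\<in>F. r * (PF (F - {e'}) r (\<lambda>A. Q (insert e (insert e' A))) - PF (F - {e'}) r (\<lambda>A. Q (insert e A)))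
         + (1 - r) * (PF (F - {e'}) r (\<lambda>A. Q (insert e' A)) - PF (F - {e'}) r Q))"
  proof (rule sum.cong[OF refl])
    fix e' assume "e' \<in> F"
    then have eq: "insert e F - {e'} = insert e (F - {e'})" using assms by auto
    have fin: "finite (F - {e'})" "e \<notin> F - {e'}" using assms by auto
    show "PF (insert e F - {e'}) r (\<lambda>A. Q (insert e' A)) - PF (insert e F - {e'}) r Q
       = r * (PF (F - {e'}) r (\<lambda>A. Q (insert e (insert e' A))) - PF (F - {e'}) r (\<lambda>A. Q (insert e A)))
         + (1 - r) * (PF (F - {e'}) r (\<lambda>A. Q (insert e' A)) - PF (F - {e'}) r Q)"
      unfolding eq PF_insert[OF fin] by (simp add: insert_commute algebra_simps)
  qed
  also have "\<dots> = r * DPF F r (\<lambda>A. Q (insert e A)) + (1 - r) * DPF F r Q"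
    unfolding DPF_def by (simp add: sum.distrib sum_distrib_left)
  finally show ?thesis by simp
qed

lemma PF_deriv:
  assumes "finite F"
  shows "((\<lambda>r. PF F r Q) has_real_derivative DPF F r Q) (at r)"
  using assms
proof (induction F arbitrary: Q rule: finite_induct)
  case empty then show ?case by (simp add: PF_empty DPF_def)
next
  case (insert e F)
  have a: "((\<lambda>r. PF F r (\<lambda>A. Q (insert e A))) has_real_derivative DPF F r (\<lambda>A. Q (insert e A))) (at r)"
    by (rule insert.IH)
  have b: "((\<lambda>r. PF F r Q) has_real_derivative DPF F r Q) (at r)" by (rule insert.IH)
  have "((\<lambda>r. r * PF F r (\<lambda>A. Q (insert e A)) + (1 - r) * PF F r Q) has_real_derivative
     (1 * PF F r (\<lambda>A. Q (insert e A)) + DPF F r (\<lambda>A. Q (insert e A)) * r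
      + ((0 - 1) * PF F r Q + DPF F r Q * (1 - r)))) (at r)"
    by (intro DERIV_add DERIV_mult DERIV_diff DERIV_const DERIV_ident a b)
  then show ?case using insert by (simp add: PF_insert DPF_insert algebra_simps)
qed

definition upclosed :: "'e set \<Rightarrow> ('e set \<Rightarrow> bool) \<Rightarrow> bool" where
  "upclosed F Q \<longleftrightarrow> (\<forall>A B. A \<subseteq> B \<longrightarrow> B \<subseteq> F \<longrightarrow> Q A \<longrightarrow> Q B)"

lemma DPF_nonneg:
  assumes "finite F" "upclosed F Q" "0 \<le> r" "r \<le> 1"
  shows "0 \<le> DPF F r Q"
  unfolding DPF_def
proof (rule sum_nonneg)
  fix e assume "e \<in> F"
  have "Q (insert e A)" if "A \<subseteq> F - {e}" "Q A" for A
    using assms(2) that \<open>e \<in> F\<close> unfolding upclosed_def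
    by (metis Diff_subset insert_subset subset_insertI subset_trans)
  then have "PF (F - {e}) r Q \<le> PF (F - {e}) r (\<lambda>A. Q (insert e A))"
    using assms by (intro PF_mono) auto
  then show "0 \<le> PF (F - {e}) r (\<lambda>A. Q (insert e A)) - PF (F - {e}) r Q" by simp
qed

lemma PF_mono_r:
  assumes "finite F" "upclosed F Q" "0 \<le> p" "p \<le> q" "q \<le> 1"
  shows "PF F p Q \<le> PF F q Q"
proof (rule DERIV_nonneg_imp_nondecreasing[of p q])
  show "p \<le> q" by fact
  fix r assume "p \<le> r" "r \<le> q"
  then have "0 \<le> DPF F r Q" using assms by (intro DPF_nonneg) auto
  then show "\<exists>y. ((\<lambda>r. PF F r Q) has_real_derivative y) (at r) \<and> 0 \<le> y"
    using PF_deriv[OF assms(1)] by blast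
qed

lemma bernoulli_clamp: "1 \<le> r \<Longrightarrow> bernoulli_pmf r = bernoulli_pmf 1"
  by (rule pmf_eqI) (simp add: bernoulli_pmf.rep_eq)

context pg begin

abbreviation Om :: "('v set \<Rightarrow> bool) set" where "Om \<equiv> PiE E (\<lambda>_. UNIV)"

lemma space_perc: "space (perc E r) = Om"
  unfolding perc_def by (simp add: space_PiM)

lemma prob_perc: "prob_space (perc E r)"
  unfolding perc_def by (rule prob_space_PiM) (simp add: prob_space_measure_pmf)

lemma perc_clamp: assumes "1 \<le> r" shows "perc E r = perc E 1"
  unfolding perc_def using bernoulli_clamp[OF assms] by simp

definition cyl :: "'v set set \<Rightarrow> 'v set set \<Rightarrow> ('v set \<Rightarrow> bool) set" where
  "cyl F A = {\<omega>\<in>Om. \<forall>e\<in>F. \<omega> e = (e \<in> A)}"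

lemma cyl_emb: "F \<subseteq> E \<Longrightarrow>
  cyl F A = prod_emb E (\<lambda>_. measure_pmf (bernoulli_pmf r)) F (PiE F (\<lambda>e. {e \<in> A}))"
  unfolding cyl_def by (auto simp: prod_emb_iff restrict_PiE_iff PiE_iff)

lemma cyl_sets: "finite F \<Longrightarrow> F \<subseteq> E \<Longrightarrow> cyl F A \<in> sets (perc E r)"
  unfolding perc_def by (subst cyl_emb[of F A r], assumption) (rule sets_PiM_I, auto)

lemma cyl_measure:
  assumes "finite F" "F \<subseteq> E" "A \<subseteq> F" "0 \<le> r" "r \<le> 1"
  shows "measure (perc E r) (cyl F A) = wt F r A"
proof -
  have "emeasure (perc E r) (cyl F A) = (\<Prod>e\<in>F. emeasure (measure_pmf (bernoulli_pmf r)) {e \<in> A})"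
    unfolding perc_def using assms
    by (subst cyl_emb[of F A r], simp) (rule emeasure_PiM_emb, auto simp: prob_space_measure_pmf)
  also have "\<dots> = (\<Prod>e\<in>F. ennreal (if e \<in> A then r else 1 - r))"
    using assms by (intro prod.cong refl) (auto simp: emeasure_pmf_single)
  also have "\<dots> = ennreal (\<Prod>e\<in>F. (if e \<in> A then r else 1 - r))"
    using assms by (intro prod_ennreal) auto
  also have "(\<Prod>e\<in>F. (if e \<in> A then r else 1 - r)) = wt F r A"
  proof -
    have "(\<Prod>e\<in>F. (if e \<in> A then r else 1 - r)) = (\<Prod>e\<in>F \<inter> {e. e \<in> A}. r) * (\<Prod>e\<in>F \<inter> - {e. e \<in> A}. 1 - r)"
      using prod.If_cases[OF assms(1), of "\<lambda>e. e \<in> A" "\<lambda>_. r" "\<lambda>_. 1 - r"] .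
    moreover have "F \<inter> {e. e \<in> A} = A" "F \<inter> - {e. e \<in> A} = F - A" using assms by auto
    ultimately show ?thesis unfolding wt_def by simp
  qed
  finally show ?thesis using assms unfolding measure_def by (simp add: wt_nonneg)
qed

lemma ev_eq: "finite F \<Longrightarrow> {\<omega>\<in>Om. Q {e\<in>F. \<omega> e}} = (\<Union>A\<in>{A\<in>Pow F. Q A}. cyl F A)"
proof (intro equalityI subsetI)
  fix \<omega> assume "\<omega> \<in> {\<omega>\<in>Om. Q {e\<in>F. \<omega> e}}"
  then show "\<omega> \<in> (\<Union>A\<in>{A\<in>Pow F. Q A}. cyl F A)" unfolding cyl_def by (intro UN_I[of "{e\<in>F. \<omega> e}"]) auto
next
  fix \<omega> assume "\<omega> \<in> (\<Union>A\<in>{A\<in>Pow F. Q A}. cyl F A)"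
  then obtain A where A: "A \<subseteq> F" "Q A" "\<omega> \<in> Om" "\<forall>e\<in>F. \<omega> e = (e\<in>A)" unfolding cyl_def by auto
  then have "{e\<in>F. \<omega> e} = A" by auto
  then show "\<omega> \<in> {\<omega>\<in>Om. Q {e\<in>F. \<omega> e}}" using A by simp
qed

lemma bridge_sets:
  assumes "finite F" "F \<subseteq> E"
  shows "{\<omega>\<in>space (perc E r). Q {e\<in>F. \<omega> e}} \<in> sets (perc E r)"
  unfolding space_perc ev_eq[OF assms(1)] using assms
  by (intro sets.finite_UN) (auto intro: cyl_sets)

lemma bridge:
  assumes "finite F" "F \<subseteq> E" "0 \<le> r" "r \<le> 1"
  shows "measure (perc E r) {\<omega>\<in>space (perc E r). Q {e\<in>F. \<omega> e}} = PF F r Q"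
proof -
  interpret prob_space "perc E r" by (rule prob_perc)
  have "measure (perc E r) (\<Union>A\<in>{A\<in>Pow F. Q A}. cyl F A) = (\<Sum>A\<in>{A\<in>Pow F. Q A}. measure (perc E r) (cyl F A))"
  proof (rule finite_measure_finite_Union)
    show "finite {A\<in>Pow F. Q A}" using assms by auto
    show "cyl F ` {A \<in> Pow F. Q A} \<subseteq> sets (perc E r)" using assms cyl_sets by auto
    show "disjoint_family_on (cyl F) {A \<in> Pow F. Q A}"
      unfolding disjoint_family_on_def cyl_def by auto
  qed
  also have "\<dots> = (\<Sum>A\<in>{A\<in>Pow F. Q A}. wt F r A)"
    using assms by (intro sum.cong refl cyl_measure) auto
  also have "\<dots> = PF F r Q"
    unfolding PF_def using assms sum.inter_filter[of "Pow F" "wt F r" Q] by simp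
  finally show ?thesis unfolding space_perc ev_eq[OF assms(1)] .
qed

lemma walk_open_iff:
  assumes "W \<subseteq> V"
  shows "cn W ({e\<in>E. \<omega> e} - D) a b \<longleftrightarrow>
    (\<exists>xs\<in>{xs. walk W (E - D) xs \<and> hd xs = a \<and> last xs = b}. walk_edges xs \<subseteq> {e\<in>E. \<omega> e})"
  unfolding cn_walk walk_iff by blast

lemma walk_edges_finite: "finite (walk_edges xs)"
  unfolding walk_edges_def by simp

lemma sets_cn:
  assumes "W \<subseteq> V"
  shows "{\<omega>\<in>space (perc E r). cn W ({e\<in>E. \<omega> e} - D) a b} \<in> sets (perc E r)"
proof -
  let ?L = "{xs. walk W (E - D) xs \<and> hd xs = a \<and> last xs = b}"
  have L: "?L \<subseteq> lists V" using assms unfolding walk_iff by auto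
  have "{\<omega>\<in>space (perc E r). cn W ({e\<in>E. \<omega> e} - D) a b}
      = (\<Union>xs\<in>?L. {\<omega>\<in>space (perc E r). (\<lambda>A. A = walk_edges xs) {e\<in>walk_edges xs. \<omega> e}})"
  proof -
    have h: "xs \<in> ?L \<Longrightarrow> walk_edges xs \<subseteq> {e\<in>E. \<omega> e} \<longleftrightarrow> (\<lambda>A. A = walk_edges xs) {e\<in>walk_edges xs. \<omega> e}" for xs \<omega>
      unfolding walk_iff by auto
    show ?thesis unfolding walk_open_iff[OF assms] using h by blast
  qed
  also have "\<dots> \<in> sets (perc E r)"
  proof (rule sets.countable_UN'')
    show "countable ?L" using L countable_V by (meson countable_lists countable_subset)
    fix xs assume "xs \<in> ?L"
    then have "walk_edges xs \<subseteq> E" unfolding walk_iff by auto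
    then show "{\<omega>\<in>space (perc E r). (\<lambda>A. A = walk_edges xs) {e\<in>walk_edges xs. \<omega> e}} \<in> sets (perc E r)"
      by (intro bridge_sets walk_edges_finite)
  qed
  finally show ?thesis .
qed

lemma sets_edge: "e \<in> E \<Longrightarrow> {\<omega>\<in>space (perc E r). \<omega> e} \<in> sets (perc E r)"
  using bridge_sets[of "{e}" r "\<lambda>A. e \<in> A"] by auto

end

lemma nn_count_ge:
  assumes "j \<in> I" shows "f j \<le> (\<integral>\<^sup>+i. f i \<partial>count_space I)"
proof -
  have "(\<integral>\<^sup>+i. f i * indicator {j} i \<partial>count_space I) = f j * emeasure (count_space I) {j}"
    using assms by (intro nn_integral_indicator_singleton) auto
  also have "emeasure (count_space I) {j} = 1" using assms by simp
  finally have "(\<integral>\<^sup>+i. f i * indicator {j} i \<partial>count_space I) = f j" by simp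
  moreover have "(\<integral>\<^sup>+i. f i * indicator {j} i \<partial>count_space I) \<le> (\<integral>\<^sup>+i. f i \<partial>count_space I)"
    by (intro nn_integral_mono) (simp add: indicator_def)
  ultimately show ?thesis by simp
qed

lemma emeasure_UN_le_nn:
  assumes "countable I" "\<And>i. i \<in> I \<Longrightarrow> A i \<in> sets M"
  shows "emeasure M (\<Union>i\<in>I. A i) \<le> (\<integral>\<^sup>+i. emeasure M (A i) \<partial>count_space I)"
proof -
  have U: "(\<Union>i\<in>I. A i) \<in> sets M" using assms by (intro sets.countable_UN'') auto
  have "emeasure M (\<Union>i\<in>I. A i) = (\<integral>\<^sup>+\<omega>. indicator (\<Union>i\<in>I. A i) \<omega> \<partial>M)"
    using U by (rule nn_integral_indicator[symmetric])
  also have "\<dots> \<le> (\<integral>\<^sup>+\<omega>. (\<integral>\<^sup>+i. indicator (A i) \<omega> \<partial>count_space I) \<partial>M)"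
  proof (rule nn_integral_mono)
    fix \<omega> show "indicator (\<Union>i\<in>I. A i) \<omega> \<le> (\<integral>\<^sup>+i. indicator (A i) \<omega> \<partial>count_space I)"
    proof (cases "\<omega> \<in> (\<Union>i\<in>I. A i)")
      case True
      then obtain j where j: "j \<in> I" "\<omega> \<in> A j" by auto
      have "indicator (\<Union>i\<in>I. A i) \<omega> = (indicator (A j) \<omega> :: ennreal)"
        using True j by simp
      also have "\<dots> \<le> (\<integral>\<^sup>+i. indicator (A i) \<omega> \<partial>count_space I)"
        using j(1) by (rule nn_count_ge)
      finally show ?thesis .
    qed simp
  qed
  also have "\<dots> = (\<integral>\<^sup>+i. (\<integral>\<^sup>+\<omega>. indicator (A i) \<omega> \<partial>M) \<partial>count_space I)"
    by (rule nn_integral_count_space_nn_integral) (auto intro: borel_measurable_indicator assms)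
  also have "\<dots> = (\<integral>\<^sup>+i. emeasure M (A i) \<partial>count_space I)"
  proof (rule nn_integral_cong)
    fix i assume "i \<in> space (count_space I)"
    then have "A i \<in> sets M" using assms(2) by simp
    then show "(\<integral>\<^sup>+\<omega>. indicator (A i) \<omega> \<partial>M) = emeasure M (A i)" by (rule nn_integral_indicator)
  qed
  finally show ?thesis .
qed

context pg begin

lemma open_walk_iff: "open_walk V E \<omega> xs \<longleftrightarrow> walk V {e\<in>E. \<omega> e} xs"
  unfolding open_walk_def walk_iff by auto

lemma A_vertex_iff: "A_vertex V E x v C \<omega> \<longleftrightarrow> cn (V - (C - {v})) {e\<in>E. \<omega> e} x v"
  unfolding A_vertex_def open_walk_iff cn_walk walk_iff by blast

lemma A_edge_iff: "A_edge V E x e C \<omega> \<longleftrightarrow> \<omega> e \<and> (\<exists>a\<in>e. cn V ({e\<in>E. \<omega> e} - (C - {e})) x a)"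
proof -
  have 1: "(open_walk V E \<omega> xs \<and> walk_edges xs \<inter> (C - {e}) = {}) \<longleftrightarrow> walk V ({e\<in>E. \<omega> e} - (C - {e})) xs" for xs
    unfolding open_walk_iff walk_iff by auto
  have 2: "A_edge V E x e C \<omega> \<longleftrightarrow> \<omega> e \<and> (\<exists>xs. walk V ({e\<in>E. \<omega> e} - (C - {e})) xs \<and> hd xs = x \<and> last xs \<in> e)"
    unfolding A_edge_def 1[symmetric] by blast
  have 3: "(\<exists>xs. walk V ({e\<in>E. \<omega> e} - (C - {e})) xs \<and> hd xs = x \<and> last xs \<in> e) \<longleftrightarrow>
     (\<exists>a\<in>e. cn V ({e\<in>E. \<omega> e} - (C - {e})) x a)"
    unfolding cn_walk by blast
  show ?thesis using 2 3 by simp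
qed

lemma conn_inf_iff: "conn_inf V E x \<omega> \<longleftrightarrow> (\<forall>n. \<exists>y. cn V {e\<in>E. \<omega> e} x y \<and> y \<notin> Bl n)"
  unfolding conn_inf_def cluster_def open_walk_iff Bl_def cn_walk by blast

lemma vcut_iff: "vertex_cutset V E x C \<longleftrightarrow> C \<subseteq> V \<and> finite {y. cn (V - C) E x y}"
proof -
  have "{y. \<exists>xs. walk V E xs \<and> hd xs = x \<and> last xs = y \<and> set xs \<inter> C = {}} = {y. cn (V - C) E x y}"
    unfolding cn_walk walk_iff by blast
  then show ?thesis unfolding vertex_cutset_def by simp
qed

lemma ecut_iff: "edge_cutset V E x C \<longleftrightarrow> C \<subseteq> E \<and> finite {y. cn V (E - C) x y}"
  unfolding edge_cutset_def cn_walk by simp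

lemma conn_set_iff: "conn_set V E x S \<longleftrightarrow> finite S \<and> x \<in> S \<and> S \<subseteq> V \<and> (\<forall>u\<in>S. \<forall>v\<in>S. cn S E u v)"
  unfolding conn_set_def cn_walk by simp

lemma cn_hit_v:
  "cn V F u y \<Longrightarrow> u \<notin> C \<Longrightarrow> cn (V - C) F u y \<or> (\<exists>v\<in>C. cn (V - (C - {v})) F u v)"
proof (induction rule: cn.induct)
  case (cn_refl a) then show ?case by (auto intro: cn.intros)
next
  case (cn_step a b c)
  show ?case
  proof (cases "b \<in> C")
    case True
    have "b \<in> V" using cn_W[OF cn_step(3)] by auto
    then have "cn (V - (C - {b})) F a b" using cn_step True
      by (intro cn.cn_step[of a b] cn.cn_refl) auto
    then show ?thesis using True by blast
  next
    case False
    with cn_step.IH have "cn (V - C) F b c \<or> (\<exists>v\<in>C. cn (V - (C - {v})) F b v)" by blast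
    then show ?thesis
    proof
      assume "cn (V - C) F b c" then show ?thesis using cn_step by (auto intro: cn.cn_step)
    next
      assume "\<exists>v\<in>C. cn (V - (C - {v})) F b v"
      then obtain v where "v \<in> C" "cn (V - (C - {v})) F b v" by blast
      then show ?thesis using cn_step by (auto intro: cn.cn_step)
    qed
  qed
qed

lemma cn_hit_e:
  "cn V F u y \<Longrightarrow> cn V (F - C) u y \<or> (\<exists>e\<in>C. e \<in> F \<and> (\<exists>a\<in>e. cn V (F - (C - {e})) u a))"
proof (induction rule: cn.induct)
  case (cn_refl a) then show ?case by (auto intro: cn.intros)
next
  case (cn_step a b c)
  show ?case
  proof (cases "{a,b} \<in> C")
    case True
    then show ?thesis using cn_step by (intro disjI2 bexI[of _ "{a,b}"]) (auto intro: cn.cn_refl)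
  next
    case False
    from cn_step.IH show ?thesis
    proof
      assume "cn V (F - C) b c" then show ?thesis using cn_step False by (auto intro: cn.cn_step)
    next
      assume "\<exists>e\<in>C. e \<in> F \<and> (\<exists>a\<in>e. cn V (F - (C - {e})) b a)"
      then obtain e a' where "e \<in> C" "e \<in> F" "a' \<in> e" "cn V (F - (C - {e})) b a'" by blast
      then show ?thesis using cn_step False by (intro disjI2 bexI[of _ e]) (auto intro: cn.cn_step)
    qed
  qed
qed

lemma sets_A_vertex: "C \<subseteq> V \<Longrightarrow> {\<omega>\<in>space (perc E r). A_vertex V E x v C \<omega>} \<in> sets (perc E r)"
  unfolding A_vertex_iff using sets_cn[of "V - (C - {v})" r "{}" x v] by auto

lemma sets_A_edge:
  assumes "e \<in> E"
  shows "{\<omega>\<in>space (perc E r). A_edge V E x e C \<omega>} \<in> sets (perc E r)"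
proof -
  have "{\<omega>\<in>space (perc E r). A_edge V E x e C \<omega>} =
     {\<omega>\<in>space (perc E r). \<omega> e} \<inter> (\<Union>a\<in>e. {\<omega>\<in>space (perc E r). cn V ({e\<in>E. \<omega> e} - (C - {e})) x a})"
    unfolding A_edge_iff by auto
  also have "\<dots> \<in> sets (perc E r)"
    using assms edge_finite sets_edge sets_cn[of V r] by (intro sets.Int sets.finite_UN) auto
  finally show ?thesis .
qed

lemma Prob_enn: "ennreal (Prob E r P) = emeasure (perc E r) {\<omega>\<in>space (perc E r). P \<omega>}"
proof -
  interpret prob_space "perc E r" by (rule prob_perc)
  show ?thesis unfolding Prob_def by (simp add: emeasure_eq_measure)
qed

lemma Prob_nonneg: "0 \<le> Prob E r P"
  unfolding Prob_def by simp

lemma Prob_mono_sets: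
  assumes "\<And>\<omega>. \<omega> \<in> space (perc E r) \<Longrightarrow> P \<omega> \<Longrightarrow> \<omega> \<in> B" "B \<in> sets (perc E r)"
  shows "ennreal (Prob E r P) \<le> emeasure (perc E r) B"
proof -
  interpret prob_space "perc E r" by (rule prob_perc)
  have "Prob E r P \<le> measure (perc E r) B"
    unfolding Prob_def using assms by (intro finite_measure_mono) auto
  then show ?thesis using assms by (simp add: emeasure_eq_measure)
qed

lemma theta_le_vsum:
  assumes "vertex_cutset V E x C"
  shows "ennreal (Prob E r (conn_inf V E x)) \<le> vsum V E x r C"
proof -
  have C: "C \<subseteq> V" "finite {y. cn (V - C) E x y}" using assms vcut_iff by auto
  have cntC: "countable C" using C countable_V countable_subset by blast
  let ?A = "\<lambda>v. {\<omega>\<in>space (perc E r). A_vertex V E x v C \<omega>}"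
  have hit: "\<exists>v\<in>C. A_vertex V E x v C \<omega>" if ci: "conn_inf V E x \<omega>" for \<omega>
  proof (cases "x \<in> C")
    case True
    then show ?thesis unfolding A_vertex_iff using xV by (intro bexI[of _ x] cn_refl) auto
  next
    case False
    have "{y. cn (V - C) E x y} \<subseteq> V" using cn_W by fastforce
    then obtain m where m: "{y. cn (V - C) E x y} \<subseteq> Bl m" using finite_in_Bl C by blast
    obtain y where y: "cn V {e\<in>E. \<omega> e} x y" "y \<notin> Bl m" using ci unfolding conn_inf_iff by blast
    from cn_hit_v[OF y(1) False] show ?thesis
    proof
      assume "cn (V - C) {e\<in>E. \<omega> e} x y"
      then have "cn (V - C) E x y" by (rule cn_mono) auto
      then show ?thesis using m y by auto
    qed (auto simp: A_vertex_iff)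
  qed
  have "ennreal (Prob E r (conn_inf V E x)) \<le> emeasure (perc E r) (\<Union>v\<in>C. ?A v)"
    using hit cntC sets_A_vertex[OF C(1)] by (intro Prob_mono_sets sets.countable_UN'') auto
  also have "\<dots> \<le> (\<integral>\<^sup>+v. emeasure (perc E r) (?A v) \<partial>count_space C)"
    using cntC sets_A_vertex[OF C(1)] by (rule emeasure_UN_le_nn)
  also have "\<dots> = vsum V E x r C"
    unfolding vsum_def by (rule nn_integral_cong) (simp add: Prob_enn)
  finally show ?thesis .
qed

lemma theta_le_esum:
  assumes "edge_cutset V E x C"
  shows "ennreal (Prob E r (conn_inf V E x)) \<le> esum V E x r C"
proof -
  have C: "C \<subseteq> E" "finite {y. cn V (E - C) x y}" using assms ecut_iff by auto
  have cntC: "countable C" using C countable_E countable_subset by blast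
  let ?A = "\<lambda>e. {\<omega>\<in>space (perc E r). A_edge V E x e C \<omega>}"
  have sA: "\<And>e. e \<in> C \<Longrightarrow> ?A e \<in> sets (perc E r)" using C sets_A_edge by auto
  have hit: "\<exists>e\<in>C. A_edge V E x e C \<omega>" if ci: "conn_inf V E x \<omega>" for \<omega>
  proof -
    have "{y. cn V (E - C) x y} \<subseteq> V" using cn_W by fastforce
    then obtain m where m: "{y. cn V (E - C) x y} \<subseteq> Bl m" using finite_in_Bl C by blast
    obtain y where y: "cn V {e\<in>E. \<omega> e} x y" "y \<notin> Bl m" using ci unfolding conn_inf_iff by blast
    from cn_hit_e[OF y(1), of C] show ?thesis
    proof
      assume "cn V ({e\<in>E. \<omega> e} - C) x y"
      then have "cn V (E - C) x y" by (rule cn_mono) auto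
      then show ?thesis using m y by auto
    qed (auto simp: A_edge_iff)
  qed
  have "ennreal (Prob E r (conn_inf V E x)) \<le> emeasure (perc E r) (\<Union>e\<in>C. ?A e)"
    using hit cntC sA by (intro Prob_mono_sets sets.countable_UN'') auto
  also have "\<dots> \<le> (\<integral>\<^sup>+e. emeasure (perc E r) (?A e) \<partial>count_space C)"
    using cntC sA by (rule emeasure_UN_le_nn)
  also have "\<dots> = esum V E x r C"
    unfolding esum_def by (rule nn_integral_cong) (simp add: Prob_enn)
  finally show ?thesis .
qed

end

context pg begin

abbreviation "vb S \<equiv> vboundary V E S"
abbreviation "eb S \<equiv> eboundary E S"

definition psi :: "real \<Rightarrow> 'v set \<Rightarrow> 'v set \<Rightarrow> real" where
  "psi r S e = PF (ES S) r (\<lambda>A. \<exists>y\<in>e. cn V A x y)"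

lemma vb_sub: "vb S \<subseteq> {z. \<exists>y\<in>S. {y,z} \<in> E}"
  unfolding vboundary_def by auto

lemma vb_finite: "finite S \<Longrightarrow> S \<subseteq> V \<Longrightarrow> finite (vb S)"
  by (rule finite_subset[OF vb_sub nbr_finite])

lemma eb_finite: "finite S \<Longrightarrow> S \<subseteq> V \<Longrightarrow> finite (eb S)"
proof -
  assume S: "finite S" "S \<subseteq> V"
  have "eb S \<subseteq> (\<Union>y\<in>S. {e\<in>E. y \<in> e})" unfolding eboundary_def by auto
  moreover have "finite (\<Union>y\<in>S. {e\<in>E. y \<in> e})" using S lf unfolding locally_finite_def by blast
  ultimately show ?thesis by (rule finite_subset)
qed

lemma eb_E: "eb S \<subseteq> E" unfolding eboundary_def by auto

lemma ES_eb_disj: "ES S \<inter> eb S = {}"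
  unfolding ES_def eboundary_def by auto

lemma eb_notin_ES: "e \<in> eb S \<Longrightarrow> e \<notin> ES S"
  using ES_eb_disj by blast

lemma cn_vb_inside: "cn W E u y \<Longrightarrow> W = V - vb S \<Longrightarrow> u \<in> S \<Longrightarrow> y \<in> S"
proof (induction rule: cn.induct)
  case (cn_refl a) then show ?case by simp
next
  case (cn_step a b c)
  have "b \<in> V - vb S" using cn_W[OF cn_step(3)] cn_step(5) by simp
  then have "b \<in> S" using cn_step(1,6) unfolding vboundary_def by auto
  then show ?case using cn_step by blast
qed

lemma cn_eb_inside: "cn V F u y \<Longrightarrow> F = E - eb S \<Longrightarrow> u \<in> S \<Longrightarrow> y \<in> S"
proof (induction rule: cn.induct)
  case (cn_refl a) then show ?case by simp
next
  case (cn_step a b c)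
  have "b \<in> S" using cn_step(1,5,6) unfolding eboundary_def by auto
  then show ?case using cn_step by blast
qed

lemma vb_cutset: "conn_set V E x S \<Longrightarrow> vertex_cutset V E x (vb S)"
proof -
  assume cs: "conn_set V E x S"
  then have S: "finite S" "x \<in> S" using conn_set_iff by auto
  have "{y. cn (V - vb S) E x y} \<subseteq> S" using cn_vb_inside S by blast
  then show ?thesis unfolding vcut_iff using S finite_subset unfolding vboundary_def by blast
qed

lemma eb_cutset: "conn_set V E x S \<Longrightarrow> edge_cutset V E x (eb S)"
proof -
  assume cs: "conn_set V E x S"
  then have S: "finite S" "x \<in> S" using conn_set_iff by auto
  have "{y. cn V (E - eb S) x y} \<subseteq> S" using cn_eb_inside S by blast
  then show ?thesis unfolding ecut_iff using S finite_subset eb_E by blast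
qed

lemma cn_to_ES:
  "cn V F u y \<Longrightarrow> u \<in> S \<Longrightarrow> y \<in> e \<Longrightarrow> F \<inter> eb S \<subseteq> {e} \<Longrightarrow> F \<subseteq> E \<Longrightarrow> \<exists>y'\<in>e. cn V (F \<inter> ES S) u y'"
proof (induction rule: cn.induct)
  case (cn_refl a) then show ?case by (auto intro: cn.cn_refl)
next
  case (cn_step a b c)
  show ?case
  proof (cases "b \<in> S")
    case True
    then obtain y' where "y' \<in> e" "cn V (F \<inter> ES S) b y'" using cn_step by blast
    moreover have "{a,b} \<in> ES S" using cn_step True unfolding ES_def by auto
    ultimately show ?thesis using cn_step by (auto intro: cn.cn_step)
  next
    case False
    then have "{a,b} \<in> eb S" using cn_step unfolding eboundary_def by blast
    then have "{a,b} = e" using cn_step by blast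
    then show ?thesis using cn_step by (auto intro: cn.cn_refl)
  qed
qed

lemma A_edge_eb:
  assumes "x \<in> S" "e \<in> eb S"
  shows "A_edge V E x e (eb S) \<omega> \<longleftrightarrow> \<omega> e \<and> (\<exists>y\<in>e. cn V ({e'\<in>E. \<omega> e'} \<inter> ES S) x y)"
proof -
  have "(\<exists>a\<in>e. cn V ({e'\<in>E. \<omega> e'} - (eb S - {e})) x a) \<longleftrightarrow> (\<exists>y\<in>e. cn V ({e'\<in>E. \<omega> e'} \<inter> ES S) x y)"
  proof
    assume "\<exists>a\<in>e. cn V ({e'\<in>E. \<omega> e'} - (eb S - {e})) x a"
    then obtain a where "a \<in> e" "cn V ({e'\<in>E. \<omega> e'} - (eb S - {e})) x a" by blast
    from cn_to_ES[OF this(2) assms(1) this(1)]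
    obtain y' where "y' \<in> e" "cn V (({e'\<in>E. \<omega> e'} - (eb S - {e})) \<inter> ES S) x y'" by blast
    then show "\<exists>y\<in>e. cn V ({e'\<in>E. \<omega> e'} \<inter> ES S) x y" by (meson cn_mono Int_mono Diff_subset order_refl)
  next
    assume "\<exists>y\<in>e. cn V ({e'\<in>E. \<omega> e'} \<inter> ES S) x y"
    then obtain y where "y \<in> e" "cn V ({e'\<in>E. \<omega> e'} \<inter> ES S) x y" by blast
    moreover have "{e'\<in>E. \<omega> e'} \<inter> ES S \<subseteq> {e'\<in>E. \<omega> e'} - (eb S - {e})" using ES_eb_disj by blast
    ultimately show "\<exists>a\<in>e. cn V ({e'\<in>E. \<omega> e'} - (eb S - {e})) x a" by (meson cn_mono order_refl)
  qed
  then show ?thesis unfolding A_edge_iff by simp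
qed

lemma Prob_A_edge_eb:
  assumes "finite S" "x \<in> S" "e \<in> eb S" "0 \<le> r" "r \<le> 1"
  shows "Prob E r (A_edge V E x e (eb S)) = r * psi r S e"
proof -
  let ?F = "insert e (ES S)"
  let ?Q = "\<lambda>A. e \<in> A \<and> (\<exists>y\<in>e. cn V (A \<inter> ES S) x y)"
  have eE: "e \<in> E" using assms eb_E by auto
  have fin: "finite ?F" using ES_finite assms by auto
  have FE: "?F \<subseteq> E" using eE ES_sub by auto
  have eq: "{\<omega>\<in>space (perc E r). A_edge V E x e (eb S) \<omega>} = {\<omega>\<in>space (perc E r). ?Q {e'\<in>?F. \<omega> e'}}"
  proof -
    have "{e'\<in>?F. \<omega> e'} \<inter> ES S = {e'\<in>E. \<omega> e'} \<inter> ES S" for \<omega> using ES_sub by auto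
    then show ?thesis unfolding A_edge_eb[OF assms(2,3)] by auto
  qed
  have "Prob E r (A_edge V E x e (eb S)) = PF ?F r ?Q"
    unfolding Prob_def eq using fin FE assms by (intro bridge) auto
  also have "\<dots> = r * PF (ES S) r (\<lambda>A. ?Q (insert e A)) + (1 - r) * PF (ES S) r ?Q"
    using assms eb_notin_ES ES_finite by (intro PF_insert) auto
  also have "PF (ES S) r ?Q = PF (ES S) r (\<lambda>_. False)"
    using eb_notin_ES[OF assms(3)] by (intro PF_cong) auto
  also have "PF (ES S) r (\<lambda>A. ?Q (insert e A)) = psi r S e"
    unfolding psi_def
  proof (rule PF_cong)
    fix A assume "A \<subseteq> ES S"
    then have "insert e A \<inter> ES S = A" using eb_notin_ES[OF assms(3)] by auto
    then show "?Q (insert e A) = (\<exists>y\<in>e. cn V A x y)" by simp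
  qed
  finally show ?thesis using ES_finite assms by (simp add: PF_const)
qed

lemma vb_hit:
  "cn W F u c \<Longrightarrow> W = V - (vb S - {v}) \<Longrightarrow> c = v \<Longrightarrow> F \<subseteq> E \<Longrightarrow> u \<in> S \<Longrightarrow> v \<notin> S \<Longrightarrow>
    \<exists>e\<in>eb S. v \<in> e \<and> e \<in> F \<and> (\<exists>a\<in>e. cn V (F - (eb S - {e})) u a)"
proof (induction rule: cn.induct)
  case (cn_refl a) then show ?case by simp
next
  case (cn_step a b c)
  have bW: "b \<in> W" using cn_W[OF cn_step(3)] by simp
  show ?case
  proof (cases "b \<in> S")
    case True
    have "\<exists>e\<in>eb S. v \<in> e \<and> e \<in> F \<and> (\<exists>a\<in>e. cn V (F - (eb S - {e})) b a)"
      using cn_step.IH[OF cn_step.prems(1,2,3) True cn_step.prems(5)] .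
    then obtain e a' where e: "e \<in> eb S" "v \<in> e" "e \<in> F" "a' \<in> e" "cn V (F - (eb S - {e})) b a'"
      by blast
    have "{a,b} \<notin> eb S"
    proof
      assume "{a,b} \<in> eb S"
      then obtain y z where yz: "{a,b} = {y,z}" "y \<in> S" "z \<notin> S" unfolding eboundary_def by blast
      then have "z \<in> {a,b}" by simp
      then show False using True cn_step.prems(4) yz(3) by blast
    qed
    then have ab: "{a,b} \<in> F - (eb S - {e})" using cn_step.hyps(1) by blast
    have aV: "a \<in> V" using cn_step.hyps(2) cn_step.prems(1) by blast
    have "cn V (F - (eb S - {e})) a a'" using cn.cn_step[OF ab aV e(5)] .
    then show ?thesis using e by blast
  next
    case False
    have abE: "{a,b} \<in> E" using cn_step by auto
    have "b \<in> V" using bW cn_step by auto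
    then have "b \<in> vb S" using False cn_step(8) abE unfolding vboundary_def by blast
    then have "b = v" using bW cn_step by auto
    moreover have "{a,b} \<in> eb S" using False cn_step(8) abE unfolding eboundary_def by blast
    moreover have "a \<in> V" using cn_step by auto
    ultimately show ?thesis using cn_step by (intro bexI[of _ "{a,b}"]) (auto intro: cn.cn_refl)
  qed
qed

lemma A_vertex_vb:
  assumes "x \<in> S" "v \<in> vb S" "A_vertex V E x v (vb S) \<omega>"
  shows "\<exists>e\<in>{e\<in>eb S. v \<in> e}. A_edge V E x e (eb S) \<omega>"
proof -
  have "v \<notin> S" using assms unfolding vboundary_def by auto
  from vb_hit[OF assms(3)[unfolded A_vertex_iff] refl refl _ assms(1) this]
  obtain e a where "e \<in> eb S" "v \<in> e" "e \<in> {e\<in>E. \<omega> e}" "a \<in> e" "cn V ({e\<in>E. \<omega> e} - (eb S - {e})) x a"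
    by blast
  then show ?thesis unfolding A_edge_iff by blast
qed

lemma vsum_le_esum:
  assumes cs: "conn_set V E x S"
  shows "vsum V E x r (vb S) \<le> esum V E x r (eb S)"
proof -
  interpret prob_space "perc E r" by (rule prob_perc)
  have S: "finite S" "x \<in> S" "S \<subseteq> V" using cs conn_set_iff by auto
  have fv: "finite (vb S)" and fe: "finite (eb S)" using vb_finite eb_finite S by auto
  let ?Pv = "\<lambda>v. Prob E r (A_vertex V E x v (vb S))"
  let ?Pe = "\<lambda>e. Prob E r (A_edge V E x e (eb S))"
  have sE: "\<And>e. e \<in> eb S \<Longrightarrow> {\<omega>\<in>space (perc E r). A_edge V E x e (eb S) \<omega>} \<in> sets (perc E r)"
    using sets_A_edge eb_E by blast
  have v_le: "?Pv v \<le> (\<Sum>e\<in>{e\<in>eb S. v \<in> e}. ?Pe e)" if v: "v \<in> vb S" for v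
  proof -
    have "?Pv v \<le> measure (perc E r) (\<Union>e\<in>{e\<in>eb S. v \<in> e}. {\<omega>\<in>space (perc E r). A_edge V E x e (eb S) \<omega>})"
      unfolding Prob_def using A_vertex_vb[OF S(2) v] sE fe
      by (intro finite_measure_mono sets.finite_UN) auto
    also have "\<dots> \<le> (\<Sum>e\<in>{e\<in>eb S. v \<in> e}. ?Pe e)"
      unfolding Prob_def using sE fe by (intro finite_measure_subadditive_finite) auto
    finally show ?thesis .
  qed
  have "(\<Sum>v\<in>vb S. ?Pv v) \<le> (\<Sum>v\<in>vb S. \<Sum>e\<in>{e\<in>eb S. v \<in> e}. ?Pe e)"
    using v_le by (intro sum_mono) auto
  also have "\<dots> = (\<Sum>e\<in>eb S. \<Sum>v\<in>{v\<in>vb S. v \<in> e}. ?Pe e)"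
    using fv fe by (rule sum.swap_restrict)
  also have "\<dots> \<le> (\<Sum>e\<in>eb S. ?Pe e)"
  proof (rule sum_mono)
    fix e assume e: "e \<in> eb S"
    then obtain y z where yz: "e = {y,z}" "y \<in> S" "z \<notin> S" unfolding eboundary_def by blast
    have "{v\<in>vb S. v \<in> e} \<subseteq> {z}" using yz unfolding vboundary_def by auto
    then have "card {v\<in>vb S. v \<in> e} \<le> card {z}" by (intro card_mono) auto
    then have "card {v\<in>vb S. v \<in> e} \<le> 1" by simp
    then show "(\<Sum>v\<in>{v\<in>vb S. v \<in> e}. ?Pe e) \<le> ?Pe e"
      using Prob_nonneg[of r] by (simp add: mult_left_le_one_le)
  qed
  finally have real_le: "(\<Sum>v\<in>vb S. ?Pv v) \<le> (\<Sum>e\<in>eb S. ?Pe e)" .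
  have "vsum V E x r (vb S) = ennreal (\<Sum>v\<in>vb S. ?Pv v)"
    unfolding vsum_def using fv by (simp add: nn_integral_count_space_finite sum_ennreal Prob_nonneg)
  also have "\<dots> \<le> ennreal (\<Sum>e\<in>eb S. ?Pe e)" using real_le by (rule ennreal_leI)
  also have "\<dots> = esum V E x r (eb S)"
    unfolding esum_def using fe by (simp add: nn_integral_count_space_finite sum_ennreal Prob_nonneg)
  finally show ?thesis .
qed

lemma esum_eb:
  assumes "finite S" "x \<in> S" "S \<subseteq> V" "0 \<le> r" "r \<le> 1"
  shows "esum V E x r (eb S) = ennreal (\<Sum>e\<in>eb S. r * psi r S e)"
proof -
  have "esum V E x r (eb S) = ennreal (\<Sum>e\<in>eb S. Prob E r (A_edge V E x e (eb S)))"
    unfolding esum_def using eb_finite assms by (simp add: nn_integral_count_space_finite sum_ennreal Prob_nonneg)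
  also have "(\<Sum>e\<in>eb S. Prob E r (A_edge V E x e (eb S))) = (\<Sum>e\<in>eb S. r * psi r S e)"
    using assms by (intro sum.cong refl Prob_A_edge_eb) auto
  finally show ?thesis .
qed

end

lemma PF_one: "finite F \<Longrightarrow> PF F 1 Q = (if Q F then 1 else 0)"
proof (induction F arbitrary: Q rule: finite_induct)
  case empty then show ?case by (simp add: PF_empty)
next
  case (insert e F) then show ?case by (simp add: PF_insert)
qed

context pg begin

definition Fn :: "nat \<Rightarrow> 'v set set" where "Fn n = ES (Bl (Suc n))"
definition Aev :: "nat \<Rightarrow> 'v set set \<Rightarrow> bool" where "Aev n O' \<longleftrightarrow> (\<exists>y. cn V O' x y \<and> y \<notin> Bl n)"
definition Rn :: "nat \<Rightarrow> 'v set set \<Rightarrow> 'v set" where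
  "Rn n O' = {v \<in> Bl (Suc n). \<exists>y. cn V O' v y \<and> y \<notin> Bl n}"
definition Sg :: "nat \<Rightarrow> 'v set set \<Rightarrow> 'v set" where "Sg n O' = Bl (Suc n) - Rn n O'"
definition Te :: "nat \<Rightarrow> 'v set \<Rightarrow> 'v set set \<Rightarrow> bool" where
  "Te n e O' \<longleftrightarrow> e \<notin> O' \<and> Aev n (insert e O') \<and> \<not> Aev n O'"
definition Pset :: "nat \<Rightarrow> 'v set set" where "Pset n = {S. S \<subseteq> Bl n \<and> x \<in> S}"

lemma Fn_finite: "finite (Fn n)" unfolding Fn_def by (intro ES_finite Bl_finite)
lemma Fn_E: "Fn n \<subseteq> E" unfolding Fn_def by (rule ES_sub)

lemma ES_edge: "{a,b} \<in> ES K \<Longrightarrow> a \<in> K \<and> b \<in> K" unfolding ES_def by auto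

lemma ES_mono: "S \<subseteq> K \<Longrightarrow> ES S \<subseteq> ES K" unfolding ES_def by auto

lemma cn_in: "cn V G u w \<Longrightarrow> G \<subseteq> ES K \<Longrightarrow> u \<in> K \<Longrightarrow> w \<in> K"
proof (induction rule: cn.induct)
  case (cn_refl a) then show ?case by simp
next
  case (cn_step a b c)
  have "{a,b} \<in> ES K" using cn_step(1,5) by blast
  then have "b \<in> K" using ES_edge by blast
  then show ?case using cn_step.IH cn_step(5) by blast
qed

lemma Bl_Suc_mono: "Bl n \<subseteq> Bl (Suc n)" by (rule Bl_mono) simp

lemma x_Lam: "x \<in> Bl (Suc n)" by (rule x_Bl)

lemma Aev_up: "upclosed F (Aev n)"
  unfolding upclosed_def Aev_def by (meson cn_mono order_refl)

lemma Rn_trans: "v \<in> Bl (Suc n) \<Longrightarrow> cn V O' v w \<Longrightarrow> w \<in> Rn n O' \<Longrightarrow> v \<in> Rn n O'"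
  unfolding Rn_def by (blast intro: cn_trans)

lemma notAev_iff: "\<not> Aev n O' \<longleftrightarrow> x \<in> Sg n O'"
  unfolding Aev_def Sg_def Rn_def using x_Lam by blast

lemma Sg_sub: "Sg n O' \<subseteq> Bl n"
proof
  fix v assume v: "v \<in> Sg n O'"
  show "v \<in> Bl n"
  proof (rule ccontr)
    assume "v \<notin> Bl n"
    moreover have "v \<in> Bl (Suc n)" using v unfolding Sg_def by blast
    moreover then have "cn V O' v v" using Bl_V by (intro cn_refl) blast
    ultimately have "v \<in> Rn n O'" unfolding Rn_def by blast
    then show False using v unfolding Sg_def by blast
  qed
qed

lemma Sg_Lam: "Sg n O' \<subseteq> Bl (Suc n)" unfolding Sg_def by blast

lemma L1: "cn V O' v y \<Longrightarrow> y \<notin> Bl n \<Longrightarrow> v \<notin> S \<Longrightarrow> O' \<subseteq> Fn n \<Longrightarrow>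
  (\<forall>w\<in>Bl (Suc n). cn V O' w y \<longrightarrow> w \<notin> S) \<Longrightarrow> cn V (O' - ES S) v y"
proof (induction rule: cn.induct)
  case (cn_refl a) then show ?case by (intro cn.cn_refl)
next
  case (cn_step a b c)
  have "{a,b} \<in> ES (Bl (Suc n))" using cn_step(1) cn_step.prems(3) unfolding Fn_def by blast
  then have bL: "b \<in> Bl (Suc n)" using ES_edge by blast
  have "b \<notin> S" using cn_step.prems(4) bL cn_step(3) by blast
  then have IH: "cn V (O' - ES S) b c" using cn_step.IH cn_step.prems by blast
  have "{a,b} \<notin> ES S" using cn_step.prems(2) ES_edge by blast
  then have "{a,b} \<in> O' - ES S" using cn_step(1) by blast
  from cn.cn_step[OF this cn_step(2) IH] show ?case .
qed

lemma L2: "cn V O' s y \<Longrightarrow> y \<notin> Bl n \<Longrightarrow> s \<in> Bl (Suc n) \<Longrightarrow> O' \<subseteq> Fn n \<Longrightarrow>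
  Sg n (O' - ES S) = S \<Longrightarrow> s \<in> Rn n (O' - ES S)"
proof (induction rule: cn.induct)
  case (cn_refl a) then show ?case unfolding Rn_def by (blast intro: cn.cn_refl)
next
  case (cn_step a b c)
  have "{a,b} \<in> ES (Bl (Suc n))" using cn_step(1) cn_step.prems(3) unfolding Fn_def by blast
  then have bL: "b \<in> Bl (Suc n)" using ES_edge by blast
  have bR: "b \<in> Rn n (O' - ES S)" using cn_step.IH cn_step.prems(1,3,4) bL by blast
  have "{a,b} \<notin> ES S"
  proof
    assume "{a,b} \<in> ES S"
    then have "b \<in> S" using ES_edge by blast
    then show False using bR cn_step.prems(4) unfolding Sg_def by blast
  qed
  then have ab: "{a,b} \<in> O' - ES S" using cn_step(1) by blast
  obtain y' where y': "cn V (O' - ES S) b y'" "y' \<notin> Bl n" using bR unfolding Rn_def by blast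
  have "cn V (O' - ES S) a y'" using cn.cn_step[OF ab cn_step(2) y'(1)] .
  then show ?case using y'(2) cn_step.prems(2) unfolding Rn_def by blast
qed

lemma Rn_mono: "O1 \<subseteq> O2 \<Longrightarrow> Rn n O1 \<subseteq> Rn n O2"
  unfolding Rn_def by (blast intro: cn_mono)

lemma Sg_indep:
  assumes "O' \<subseteq> Fn n"
  shows "Sg n O' = S \<longleftrightarrow> Sg n (O' - ES S) = S"
proof -
  have R1: "Rn n (O' - ES S) \<subseteq> Rn n O'" by (rule Rn_mono) blast
  have R2: "Rn n O' \<subseteq> Rn n (O' - ES S)" if h: "Sg n O' = S \<or> Sg n (O' - ES S) = S"
  proof
    fix v assume v: "v \<in> Rn n O'"
    then obtain y where y: "v \<in> Bl (Suc n)" "cn V O' v y" "y \<notin> Bl n" unfolding Rn_def by blast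
    from h show "v \<in> Rn n (O' - ES S)"
    proof
      assume S: "Sg n O' = S"
      have vS: "v \<notin> S" using v S unfolding Sg_def by blast
      have "\<forall>w\<in>Bl (Suc n). cn V O' w y \<longrightarrow> w \<notin> S" using S y(3) unfolding Sg_def Rn_def by blast
      then have "cn V (O' - ES S) v y" using L1[OF y(2) y(3) vS assms] by blast
      then show ?thesis using y unfolding Rn_def by blast
    next
      assume "Sg n (O' - ES S) = S"
      then show ?thesis using L2[OF y(2) y(3) y(1) assms] by blast
    qed
  qed
  show ?thesis
  proof
    assume "Sg n O' = S"
    then have "Rn n O' = Rn n (O' - ES S)" using R1 R2 by blast
    then show "Sg n (O' - ES S) = S" using \<open>Sg n O' = S\<close> unfolding Sg_def by simp
  next
    assume "Sg n (O' - ES S) = S"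
    then have "Rn n O' = Rn n (O' - ES S)" using R1 R2 by blast
    then show "Sg n O' = S" using \<open>Sg n (O' - ES S) = S\<close> unfolding Sg_def by simp
  qed
qed

lemma L3: "cn V O' u w \<Longrightarrow> u \<in> Sg n O' \<Longrightarrow> O' \<subseteq> Fn n \<Longrightarrow> cn V (O' \<inter> ES (Sg n O')) u w"
proof (induction rule: cn.induct)
  case (cn_refl a) then show ?case by (intro cn.cn_refl)
next
  case (cn_step a b c)
  have "{a,b} \<in> ES (Bl (Suc n))" using cn_step(1) cn_step.prems(2) unfolding Fn_def by blast
  then have bL: "b \<in> Bl (Suc n)" using ES_edge by blast
  have aL: "a \<in> Bl (Suc n)" using cn_step.prems(1) Sg_Lam by blast
  have bV: "b \<in> V" using bL Bl_V by blast
  have bS: "b \<in> Sg n O'"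
  proof (rule ccontr)
    assume "b \<notin> Sg n O'"
    then have "b \<in> Rn n O'" using bL unfolding Sg_def by blast
    moreover have "cn V O' a b" using cn.cn_step[OF cn_step(1) cn_step(2) cn.cn_refl[OF bV]] .
    ultimately have "a \<in> Rn n O'" using Rn_trans aL by blast
    then show False using cn_step.prems(1) unfolding Sg_def by blast
  qed
  have "{a,b} \<in> E" using cn_step(1) cn_step.prems(2) Fn_E by blast
  then have e1: "{a,b} \<in> O' \<inter> ES (Sg n O')" using cn_step(1) cn_step.prems(1) bS unfolding ES_def by blast
  have e2: "cn V (O' \<inter> ES (Sg n O')) b c" using cn_step.IH bS cn_step.prems(2) by blast
  show ?case using cn.cn_step[OF e1 cn_step(2) e2] .
qed

lemma Te_char:
  assumes O: "O' \<subseteq> Fn n" and S: "S \<subseteq> Bl n" "x \<in> S" and SgS: "Sg n O' = S" and e: "e \<in> Fn n"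
  shows "Te n e O' \<longleftrightarrow> e \<in> eb S \<and> (\<exists>y\<in>e. cn V (O' \<inter> ES S) x y)"
proof
  assume T: "Te n e O'"
  then obtain w where w: "cn V (insert e O') x w" "w \<notin> Bl n" unfolding Te_def Aev_def by blast
  have nA: "\<not> Aev n O'" using T unfolding Te_def by blast
  from cn_insert[OF w(1)] have "\<exists>a b. e = {a,b} \<and> cn V O' x a \<and> cn V O' b w"
    using nA w(2) unfolding Aev_def by blast
  then obtain a b where ab: "e = {a,b}" "cn V O' x a" "cn V O' b w" by blast
  have eL: "e \<in> ES (Bl (Suc n))" using e unfolding Fn_def .
  then have aL: "a \<in> Bl (Suc n)" and bL: "b \<in> Bl (Suc n)" using ES_edge ab(1) by blast+
  have bR: "b \<in> Rn n O'" using bL ab(3) w(2) unfolding Rn_def by blast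
  then have bS: "b \<notin> S" using SgS unfolding Sg_def by blast
  have aS: "a \<in> S"
  proof (rule ccontr)
    assume "a \<notin> S"
    then have "a \<in> Rn n O'" using aL SgS unfolding Sg_def by blast
    then have "x \<in> Rn n O'" using Rn_trans[OF x_Lam ab(2)] by blast
    then show False using S(2) SgS unfolding Sg_def by blast
  qed
  have eE: "e \<in> E" using e Fn_E by blast
  have "e \<in> eb S" unfolding eboundary_def using eE ab(1) aS bS by blast
  moreover have "cn V (O' \<inter> ES S) x a" using L3[OF ab(2) _ O] S(2) SgS by simp
  ultimately show "e \<in> eb S \<and> (\<exists>y\<in>e. cn V (O' \<inter> ES S) x y)" using ab(1) by blast
next
  assume h: "e \<in> eb S \<and> (\<exists>y\<in>e. cn V (O' \<inter> ES S) x y)"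
  then obtain y z where yz: "e = {y,z}" "y \<in> S" "z \<notin> S" "e \<in> E" unfolding eboundary_def by blast
  obtain y' where y': "y' \<in> e" "cn V (O' \<inter> ES S) x y'" using h by blast
  have "y' \<in> S" using cn_in[OF y'(2) _ S(2)] by blast
  then have yy: "y' = y" using y'(1) yz by blast
  have eL: "e \<in> ES (Bl (Suc n))" using e unfolding Fn_def .
  then have zL: "z \<in> Bl (Suc n)" and yL: "y \<in> Bl (Suc n)" using ES_edge yz(1) by blast+
  have "z \<in> Rn n O'" using zL yz(3) SgS unfolding Sg_def by blast
  then obtain w where w: "cn V O' z w" "w \<notin> Bl n" unfolding Rn_def by blast
  have nA: "\<not> Aev n O'" using notAev_iff S(2) SgS by blast
  have eO: "e \<notin> O'"
  proof
    assume "e \<in> O'"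
    then have "cn V O' y w" using cn.cn_step[of y z O' V w] yz(1) w(1) yL Bl_V by blast
    then have "y \<in> Rn n O'" using yL w(2) unfolding Rn_def by blast
    then show False using yz(2) SgS unfolding Sg_def by blast
  qed
  have c1: "cn V (insert e O') x y" using y'(2) yy by (rule_tac cn_mono) auto
  have c2: "cn V (insert e O') z w" using w(1) by (rule cn_mono) auto
  have "cn V (insert e O') y w" using cn.cn_step[of y z "insert e O'" V w] yz(1) c2 yL Bl_V by blast
  then have "Aev n (insert e O')" using cn_trans[OF c1] w(2) unfolding Aev_def by blast
  then show "Te n e O'" using nA eO unfolding Te_def by blast
qed

end

context pg begin

lemma eb_sub_Fn: "S \<subseteq> Bl n \<Longrightarrow> eb S \<subseteq> Fn n"
proof
  fix e assume S: "S \<subseteq> Bl n" and e: "e \<in> eb S"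
  then obtain y z where yz: "e = {y,z}" "y \<in> S" "e \<in> E" unfolding eboundary_def by blast
  have "y \<in> Bl n" using yz S by blast
  then have "z \<in> Bl (Suc n)" "y \<in> Bl (Suc n)" using Bl_step[of y n z] yz Bl_Suc_mono by auto
  then show "e \<in> Fn n" unfolding Fn_def ES_def using yz by blast
qed

lemma PF_Te_S:
  assumes S: "S \<subseteq> Bl n" "x \<in> S" and e: "e \<in> Fn n"
  shows "PF (Fn n) r (\<lambda>O'. Sg n O' = S \<and> Te n e O') =
         PF (Fn n) r (\<lambda>O'. Sg n O' = S) * (if e \<in> eb S then psi r S e else 0)"
proof -
  let ?F1 = "Fn n - ES S" and ?F2 = "ES S"
  have F2F: "ES S \<subseteq> Fn n" unfolding Fn_def using S Bl_Suc_mono by (intro ES_mono) blast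
  have FU: "?F1 \<union> ?F2 = Fn n" using F2F by blast
  have fin1: "finite ?F1" "finite ?F2" using Fn_finite F2F finite_subset by auto
  have dis: "?F1 \<inter> ?F2 = {}" by blast
  have sg: "Sg n O' = S \<longleftrightarrow> Sg n (O' \<inter> ?F1) = S" if O: "O' \<subseteq> Fn n" for O'
  proof -
    have "O' - ES S = O' \<inter> ?F1" using O by blast
    then show ?thesis using Sg_indep[OF O, of S] by simp
  qed
  have "PF (Fn n) r (\<lambda>O'. Sg n O' = S \<and> Te n e O') =
     PF (?F1 \<union> ?F2) r (\<lambda>O'. (\<lambda>A. Sg n A = S) (O' \<inter> ?F1) \<and> (\<lambda>B. e \<in> eb S \<and> (\<exists>y\<in>e. cn V B x y)) (O' \<inter> ?F2))"
    unfolding FU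
  proof (rule PF_cong)
    fix O' assume O: "O' \<subseteq> Fn n"
    show "(Sg n O' = S \<and> Te n e O') =
      ((\<lambda>A. Sg n A = S) (O' \<inter> ?F1) \<and> (\<lambda>B. e \<in> eb S \<and> (\<exists>y\<in>e. cn V B x y)) (O' \<inter> ?F2))"
    proof
      assume h: "Sg n O' = S \<and> Te n e O'"
      then have "e \<in> eb S \<and> (\<exists>y\<in>e. cn V (O' \<inter> ES S) x y)" using Te_char[OF O S _ e] by blast
      then show "(\<lambda>A. Sg n A = S) (O' \<inter> ?F1) \<and> (\<lambda>B. e \<in> eb S \<and> (\<exists>y\<in>e. cn V B x y)) (O' \<inter> ?F2)"
        using h sg[OF O] by simp
    next
      assume h: "(\<lambda>A. Sg n A = S) (O' \<inter> ?F1) \<and> (\<lambda>B. e \<in> eb S \<and> (\<exists>y\<in>e. cn V B x y)) (O' \<inter> ?F2)"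
      then have s: "Sg n O' = S" using sg[OF O] by simp
      have "e \<in> eb S \<and> (\<exists>y\<in>e. cn V (O' \<inter> ES S) x y)" using h by simp
      then show "Sg n O' = S \<and> Te n e O'" using Te_char[OF O S s e] s by blast
    qed
  qed
  also have "\<dots> = PF ?F1 r (\<lambda>A. Sg n A = S) * PF ?F2 r (\<lambda>B. e \<in> eb S \<and> (\<exists>y\<in>e. cn V B x y))"
    by (rule PF_factor[OF fin1 dis])
  also have "PF ?F2 r (\<lambda>B. e \<in> eb S \<and> (\<exists>y\<in>e. cn V B x y)) = (if e \<in> eb S then psi r S e else 0)"
    by (cases "e \<in> eb S") (simp_all add: psi_def PF_const fin1)
  also have "PF ?F1 r (\<lambda>A. Sg n A = S) = PF (Fn n) r (\<lambda>O'. Sg n O' = S)"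
  proof -
    have "PF (Fn n) r (\<lambda>O'. Sg n O' = S) =
       PF (?F1 \<union> ?F2) r (\<lambda>O'. (\<lambda>A. Sg n A = S) (O' \<inter> ?F1) \<and> (\<lambda>_. True) (O' \<inter> ?F2))"
      unfolding FU by (rule PF_cong) (simp add: sg)
    also have "\<dots> = PF ?F1 r (\<lambda>A. Sg n A = S) * PF ?F2 r (\<lambda>_. True)"
      by (rule PF_factor[OF fin1 dis])
    finally show ?thesis using fin1 by (simp add: PF_True)
  qed
  finally show ?thesis .
qed

lemma PF_false: "(\<And>A. A \<subseteq> F \<Longrightarrow> \<not> Q A) \<Longrightarrow> finite F \<Longrightarrow> PF F r Q = 0"
proof -
  assume "\<And>A. A \<subseteq> F \<Longrightarrow> \<not> Q A" "finite F"
  then have "PF F r Q = PF F r (\<lambda>_. False)" by (intro PF_cong) auto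
  then show ?thesis using \<open>finite F\<close> by (simp add: PF_const)
qed

lemma sum_S_term:
  assumes S: "S \<in> Pow (Bl (Suc n))"
  shows "(\<Sum>e\<in>Fn n. PF (Fn n) r (\<lambda>O'. Sg n O' = S \<and> Te n e O')) =
    (if S \<in> Pset n then PF (Fn n) r (\<lambda>O'. Sg n O' = S) * (\<Sum>e\<in>eb S. psi r S e) else 0)"
proof (cases "S \<in> Pset n")
  case True
  then have S': "S \<subseteq> Bl n" "x \<in> S" unfolding Pset_def by auto
  have "(\<Sum>e\<in>Fn n. PF (Fn n) r (\<lambda>O'. Sg n O' = S \<and> Te n e O')) =
     (\<Sum>e\<in>Fn n. PF (Fn n) r (\<lambda>O'. Sg n O' = S) * (if e \<in> eb S then psi r S e else 0))"
    using S' by (intro sum.cong refl PF_Te_S) auto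
  also have "\<dots> = PF (Fn n) r (\<lambda>O'. Sg n O' = S) * (\<Sum>e\<in>Fn n. if e \<in> eb S then psi r S e else 0)"
    by (simp add: sum_distrib_left)
  also have "(\<Sum>e\<in>Fn n. if e \<in> eb S then psi r S e else 0) = (\<Sum>e\<in>Fn n \<inter> eb S. psi r S e)"
    using Fn_finite by (simp add: sum.inter_restrict)
  also have "Fn n \<inter> eb S = eb S" using eb_sub_Fn[OF S'(1)] by blast
  finally show ?thesis using True by simp
next
  case False
  have "PF (Fn n) r (\<lambda>O'. Sg n O' = S \<and> Te n e O') = 0" for e
  proof (rule PF_false[OF _ Fn_finite])
    fix A assume "A \<subseteq> Fn n"
    show "\<not> (Sg n A = S \<and> Te n e A)"
    proof
      assume h: "Sg n A = S \<and> Te n e A"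
      then have "x \<in> Sg n A" using notAev_iff unfolding Te_def by blast
      then have "S \<in> Pset n" using h Sg_sub unfolding Pset_def by blast
      then show False using False by blast
    qed
  qed
  then show ?thesis using False by simp
qed

lemma notA_term:
  assumes "0 \<le> c"
  shows "(if S \<in> Pset n then PF (Fn n) r (\<lambda>O'. Sg n O' = S) * c else 0) =
    c * PF (Fn n) r (\<lambda>O'. Sg n O' = S \<and> \<not> Aev n O')"
proof (cases "S \<in> Pset n")
  case True
  then have "x \<in> S" unfolding Pset_def by blast
  then have "PF (Fn n) r (\<lambda>O'. Sg n O' = S \<and> \<not> Aev n O') = PF (Fn n) r (\<lambda>O'. Sg n O' = S)"
    using notAev_iff by (intro PF_cong) blast
  then show ?thesis using True by simp
next
  case False
  have "PF (Fn n) r (\<lambda>O'. Sg n O' = S \<and> \<not> Aev n O') = 0"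
  proof (rule PF_false[OF _ Fn_finite])
    fix A assume "A \<subseteq> Fn n"
    show "\<not> (Sg n A = S \<and> \<not> Aev n A)"
    proof
      assume h: "Sg n A = S \<and> \<not> Aev n A"
      then have "S \<in> Pset n" using notAev_iff Sg_sub unfolding Pset_def by blast
      then show False using False by blast
    qed
  qed
  then show ?thesis using False by simp
qed

lemma Te_le:
  assumes e: "e \<in> Fn n" and r: "0 \<le> r" "r \<le> 1"
  shows "PF (Fn n) r (Te n e) \<le> PF (Fn n - {e}) r (\<lambda>A. Aev n (insert e A)) - PF (Fn n - {e}) r (Aev n)"
proof -
  let ?G = "Fn n - {e}"
  let ?P = "PF ?G r (\<lambda>A. Aev n (insert e A) \<and> \<not> Aev n A)"
  have fin: "finite ?G" "e \<notin> ?G" using Fn_finite by auto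
  have FG: "insert e ?G = Fn n" using e by blast
  have "PF (insert e ?G) r (Te n e) = r * PF ?G r (\<lambda>A. Te n e (insert e A)) + (1 - r) * PF ?G r (Te n e)"
    by (rule PF_insert[OF fin])
  then have "PF (Fn n) r (Te n e) = r * PF ?G r (\<lambda>A. Te n e (insert e A)) + (1 - r) * PF ?G r (Te n e)"
    unfolding FG .
  also have "PF ?G r (\<lambda>A. Te n e (insert e A)) = 0"
    by (rule PF_false[OF _ fin(1)]) (simp add: Te_def)
  also have "PF ?G r (Te n e) = ?P"
  proof (rule PF_cong)
    fix A assume "A \<subseteq> ?G"
    then have "e \<notin> A" by blast
    then show "Te n e A = (Aev n (insert e A) \<and> \<not> Aev n A)" unfolding Te_def by simp
  qed
  finally have eq: "PF (Fn n) r (Te n e) = (1 - r) * ?P" by simp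
  have P0: "0 \<le> ?P" using r by (rule PF_nonneg)
  have "PF ?G r (\<lambda>A. Aev n (insert e A)) = PF ?G r (\<lambda>A. Aev n (insert e A) \<and> Aev n A) + ?P"
    by (rule PF_split)
  also have "PF ?G r (\<lambda>A. Aev n (insert e A) \<and> Aev n A) = PF ?G r (Aev n)"
  proof (rule PF_cong)
    fix A
    have "Aev n A \<Longrightarrow> Aev n (insert e A)"
      unfolding Aev_def using cn_mono[of V A x _ V "insert e A"] by blast
    then show "(Aev n (insert e A) \<and> Aev n A) = Aev n A" by blast
  qed
  finally have "?P = PF ?G r (\<lambda>A. Aev n (insert e A)) - PF ?G r (Aev n)" by simp
  then show ?thesis using eq P0 r by (simp add: mult_left_le_one_le)
qed

lemma DPF_lower:
  assumes r: "0 \<le> r" "r \<le> 1" and c: "0 \<le> c"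
    and hyp: "\<forall>S\<in>Pset n. c \<le> (\<Sum>e\<in>eb S. psi r S e)"
  shows "c * (1 - PF (Fn n) r (Aev n)) \<le> DPF (Fn n) r (Aev n)"
proof -
  let ?F = "Fn n" and ?T = "Pow (Bl (Suc n))"
  have finT: "finite ?T" using Bl_finite by simp
  have sgT: "\<And>A. A \<subseteq> ?F \<Longrightarrow> Sg n A \<in> ?T" using Sg_Lam by blast
  have "c * (1 - PF ?F r (Aev n)) = c * PF ?F r (\<lambda>O'. \<not> Aev n O')"
    using Fn_finite by (simp add: PF_not)
  also have "PF ?F r (\<lambda>O'. \<not> Aev n O') = (\<Sum>S\<in>?T. PF ?F r (\<lambda>O'. Sg n O' = S \<and> \<not> Aev n O'))"
    by (rule PF_partition[OF finT sgT])
  also have "c * \<dots> = (\<Sum>S\<in>?T. if S \<in> Pset n then PF ?F r (\<lambda>O'. Sg n O' = S) * c else 0)"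
    unfolding sum_distrib_left using notA_term[OF c] by simp
  also have "\<dots> \<le> (\<Sum>S\<in>?T. if S \<in> Pset n then PF ?F r (\<lambda>O'. Sg n O' = S) * (\<Sum>e\<in>eb S. psi r S e) else 0)"
  proof (rule sum_mono)
    fix S assume "S \<in> ?T"
    show "(if S \<in> Pset n then PF ?F r (\<lambda>O'. Sg n O' = S) * c else 0)
      \<le> (if S \<in> Pset n then PF ?F r (\<lambda>O'. Sg n O' = S) * (\<Sum>e\<in>eb S. psi r S e) else 0)"
      using hyp PF_nonneg[OF r] by (auto intro: mult_left_mono)
  qed
  also have "\<dots> = (\<Sum>S\<in>?T. \<Sum>e\<in>?F. PF ?F r (\<lambda>O'. Sg n O' = S \<and> Te n e O'))"
    using sum_S_term by (intro sum.cong refl) simp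
  also have "\<dots> = (\<Sum>e\<in>?F. \<Sum>S\<in>?T. PF ?F r (\<lambda>O'. Sg n O' = S \<and> Te n e O'))"
    by (rule sum.swap)
  also have "\<dots> = (\<Sum>e\<in>?F. PF ?F r (Te n e))"
    by (intro sum.cong refl PF_partition[OF finT sgT, symmetric])
  also have "\<dots> \<le> (\<Sum>e\<in>?F. PF (?F - {e}) r (\<lambda>A. Aev n (insert e A)) - PF (?F - {e}) r (Aev n))"
    using r by (intro sum_mono Te_le) auto
  also have "\<dots> = DPF ?F r (Aev n)" unfolding DPF_def ..
  finally show ?thesis .
qed

end

context pg begin

lemma cn_restrict: "cn V G u v \<Longrightarrow> u \<in> C \<Longrightarrow> (\<forall>a b. {a,b} \<in> G \<longrightarrow> a \<in> C \<longrightarrow> b \<in> C) \<Longrightarrow> cn C G u v"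
proof (induction rule: cn.induct)
  case (cn_refl a) then show ?case by (intro cn.cn_refl)
next
  case (cn_step a b c)
  have "b \<in> C" using cn_step(1) cn_step.prems by blast
  then have "cn C G b c" using cn_step.IH cn_step.prems(2) by blast
  from cn.cn_step[OF cn_step(1) cn_step.prems(1) this] show ?case .
qed

lemma cn_to_ESC: "cn V G u y \<Longrightarrow> u \<in> C \<Longrightarrow> G \<subseteq> E \<Longrightarrow> (\<forall>a b. {a,b} \<in> G \<longrightarrow> a \<in> C \<longrightarrow> b \<in> C) \<Longrightarrow>
   cn V (G \<inter> ES C) u y"
proof (induction rule: cn.induct)
  case (cn_refl a) then show ?case by (intro cn.cn_refl)
next
  case (cn_step a b c)
  have bC: "b \<in> C" using cn_step(1) cn_step.prems by blast
  then have IH: "cn V (G \<inter> ES C) b c" using cn_step.IH cn_step.prems(2,3) by blast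
  have "{a,b} \<in> G \<inter> ES C" using cn_step(1) cn_step.prems(1,2) bC unfolding ES_def by blast
  from cn.cn_step[OF this cn_step(2) IH] show ?case .
qed

lemma psi_nonneg: "0 \<le> r \<Longrightarrow> r \<le> 1 \<Longrightarrow> 0 \<le> psi r S e"
  unfolding psi_def by (rule PF_nonneg)

lemma comp_bound:
  assumes S: "finite S" "S \<subseteq> V" "x \<in> S" and r: "0 \<le> r" "r \<le> 1"
  defines "C \<equiv> {v. cn V (ES S) x v}"
  shows "conn_set V E x C" "(\<Sum>e\<in>eb C. psi r C e) \<le> (\<Sum>e\<in>eb S. psi r S e)"
proof -
  have CS: "C \<subseteq> S" unfolding C_def using cn_in[of "ES S" x _ S] S(3) by blast
  have xC: "x \<in> C" unfolding C_def using xV by (blast intro: cn_refl)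
  have clos: "\<forall>a b. {a,b} \<in> ES S \<longrightarrow> a \<in> C \<longrightarrow> b \<in> C"
  proof (intro allI impI)
    fix a b assume ab: "{a,b} \<in> ES S" "a \<in> C"
    have "b \<in> V" using ab(1) ES_sub edge_V by blast
    have "cn V (ES S) x a" using ab(2) unfolding C_def by simp
    then have "cn V (ES S) x b" using ab(1) \<open>b \<in> V\<close> by (rule cn_snoc)
    then show "b \<in> C" unfolding C_def by simp
  qed
  have "\<forall>u\<in>C. \<forall>v\<in>C. cn C E u v"
  proof (intro ballI)
    fix u v assume uv: "u \<in> C" "v \<in> C"
    have u: "cn V (ES S) x u" using uv(1) unfolding C_def by simp
    have v: "cn V (ES S) x v" using uv(2) unfolding C_def by simp
    have "cn V (ES S) u v" using cn_trans[OF cn_sym[OF u] v] .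
    then have "cn C (ES S) u v" using cn_restrict uv(1) clos by blast
    then show "cn C E u v" using ES_sub by (rule_tac cn_mono) auto
  qed
  then show cs: "conn_set V E x C" unfolding conn_set_iff using CS S xC finite_subset by blast
  have ebC: "eb C \<subseteq> eb S"
  proof
    fix e assume "e \<in> eb C"
    then obtain y z where yz: "e \<in> E" "e = {y,z}" "y \<in> C" "z \<notin> C" unfolding eboundary_def by blast
    have "z \<notin> S"
    proof
      assume "z \<in> S"
      then have "{y,z} \<in> ES S" using yz CS unfolding ES_def by blast
      then show False using clos yz by blast
    qed
    then show "e \<in> eb S" using yz CS unfolding eboundary_def by blast
  qed
  have ps: "psi r S e = psi r C e" for e
  proof -
    have ESC: "ES C \<subseteq> ES S" using CS by (rule ES_mono)
    have "psi r S e = PF (ES S) r (\<lambda>A. (\<lambda>B. \<exists>y\<in>e. cn V B x y) (A \<inter> ES C))"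
      unfolding psi_def
    proof (rule PF_cong)
      fix A assume A: "A \<subseteq> ES S"
      have "\<forall>a b. {a,b} \<in> A \<longrightarrow> a \<in> C \<longrightarrow> b \<in> C" using clos A by blast
      then have "cn V A x y \<Longrightarrow> cn V (A \<inter> ES C) x y" for y
        using cn_to_ESC[of A x y C] xC A ES_sub by blast
      moreover have "cn V (A \<inter> ES C) x y \<Longrightarrow> cn V A x y" for y by (rule cn_mono) auto
      ultimately show "(\<exists>y\<in>e. cn V A x y) = (\<lambda>B. \<exists>y\<in>e. cn V B x y) (A \<inter> ES C)" by blast
    qed
    also have "\<dots> = psi r C e" unfolding psi_def using ES_finite S(1) ESC by (intro PF_marg) auto
    finally show ?thesis .
  qed
  have "(\<Sum>e\<in>eb C. psi r C e) = (\<Sum>e\<in>eb C. psi r S e)" using ps by simp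
  also have "\<dots> \<le> (\<Sum>e\<in>eb S. psi r S e)"
    using eb_finite S ebC psi_nonneg r by (intro sum_mono2) auto
  finally show "(\<Sum>e\<in>eb C. psi r C e) \<le> (\<Sum>e\<in>eb S. psi r S e)" .
qed

lemma psi_mono:
  assumes "finite S" "0 \<le> p" "p \<le> r" "r \<le> 1"
  shows "psi p S e \<le> psi r S e"
  unfolding psi_def using assms ES_finite
  by (intro PF_mono_r) (auto simp: upclosed_def intro: cn_mono)

lemma hyp_r:
  assumes p: "0 \<le> p" "p \<le> r" "r \<le> 1"
    and hyp: "\<forall>S. conn_set V E x S \<longrightarrow> c \<le> (\<Sum>e\<in>eb S. p * psi p S e)"
  shows "\<forall>S\<in>Pset n. c \<le> (\<Sum>e\<in>eb S. psi r S e)"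
proof
  fix S assume "S \<in> Pset n"
  then have S: "finite S" "S \<subseteq> V" "x \<in> S" unfolding Pset_def using Bl_finite Bl_V finite_subset by blast+
  define C where "C = {v. cn V (ES S) x v}"
  have r: "0 \<le> r" using p by simp
  have cs: "conn_set V E x C" using comp_bound(1)[OF S r p(3)] unfolding C_def .
  then have C: "finite C" "x \<in> C" "C \<subseteq> V" using conn_set_iff by auto
  have "c \<le> (\<Sum>e\<in>eb C. p * psi p C e)" using hyp cs by blast
  also have "\<dots> \<le> (\<Sum>e\<in>eb C. psi r C e)"
  proof (rule sum_mono)
    fix e
    have "p * psi p C e \<le> psi p C e"
      using psi_nonneg[of p C e] p by (simp add: mult_left_le_one_le)
    also have "\<dots> \<le> psi r C e" using psi_mono C(1) p by blast
    finally show "p * psi p C e \<le> psi r C e" .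
  qed
  also have "\<dots> \<le> (\<Sum>e\<in>eb S. psi r S e)" using comp_bound(2)[OF S r p(3)] unfolding C_def .
  finally show "c \<le> (\<Sum>e\<in>eb S. psi r S e)" .
qed

lemma theta_n_lb:
  assumes pq: "0 \<le> p" "p < q" "q \<le> 1" and c: "0 < c"
    and hyp: "\<forall>S. conn_set V E x S \<longrightarrow> c \<le> (\<Sum>e\<in>eb S. p * psi p S e)"
  shows "c * (q - p) / (1 + c * (q - p)) \<le> PF (Fn n) q (Aev n)"
proof -
  let ?th = "\<lambda>r. PF (Fn n) r (Aev n)"
  let ?K = "c * (1 - ?th q)"
  have mono: "?th r \<le> ?th q" if "p \<le> r" "r \<le> q" for r
    using that pq Fn_finite Aev_up by (intro PF_mono_r) auto
  have "?th p - ?K * p \<le> ?th q - ?K * q"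
  proof (rule DERIV_nonneg_imp_nondecreasing[of p q "\<lambda>r. ?th r - ?K * r"])
    show "p \<le> q" using pq by simp
    fix r assume r: "p \<le> r" "r \<le> q"
    have h: "\<forall>S\<in>Pset n. c \<le> (\<Sum>e\<in>eb S. psi r S e)" using hyp_r[of p r c n] r pq hyp by simp
    have "c * (1 - ?th r) \<le> DPF (Fn n) r (Aev n)"
      using DPF_lower[of r c n] r pq c h by simp
    moreover have "?K \<le> c * (1 - ?th r)" using mono[OF r] c by (simp add: mult_left_mono)
    ultimately have "0 \<le> DPF (Fn n) r (Aev n) - ?K" by simp
    moreover have "((\<lambda>r. ?th r - ?K * r) has_real_derivative (DPF (Fn n) r (Aev n) - ?K * 1)) (at r)"
      by (intro DERIV_diff DERIV_cmult PF_deriv Fn_finite DERIV_ident)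
    ultimately show "\<exists>y. ((\<lambda>r. ?th r - ?K * r) has_real_derivative y) (at r) \<and> 0 \<le> y" by auto
  qed
  then have "?K * (q - p) \<le> ?th q - ?th p" by (simp add: algebra_simps)
  moreover have "0 \<le> ?th p" using pq by (intro PF_nonneg) auto
  ultimately have "c * (q - p) * (1 - ?th q) \<le> ?th q" by (simp add: algebra_simps)
  then have "c * (q - p) \<le> ?th q * (1 + c * (q - p))" by (simp add: algebra_simps)
  moreover have "0 < 1 + c * (q - p)" using c pq by (simp add: add_pos_nonneg)
  ultimately show ?thesis by (simp add: divide_le_eq)
qed

lemma Sn_eq:
  "{\<omega>\<in>space (perc E r). \<exists>y. cn V {e\<in>E. \<omega> e} x y \<and> y \<notin> Bl n} = {\<omega>\<in>space (perc E r). Aev n {e\<in>Fn n. \<omega> e}}"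
proof -
  have "(\<exists>y. cn V {e\<in>E. \<omega> e} x y \<and> y \<notin> Bl n) \<longleftrightarrow> Aev n {e\<in>Fn n. \<omega> e}" for \<omega>
  proof
    assume "\<exists>y. cn V {e\<in>E. \<omega> e} x y \<and> y \<notin> Bl n"
    then obtain y where y: "cn V {e\<in>E. \<omega> e} x y" "y \<notin> Bl n" by blast
    from cn_prefix[OF y(1) x_Lam y(2)] obtain y' where
      "y' \<notin> Bl n" "cn V ({e\<in>E. \<omega> e} \<inter> ES (Bl (Suc n))) x y'" by blast
    moreover have "{e\<in>E. \<omega> e} \<inter> ES (Bl (Suc n)) = {e\<in>Fn n. \<omega> e}" using Fn_E unfolding Fn_def by blast
    ultimately show "Aev n {e\<in>Fn n. \<omega> e}" unfolding Aev_def by auto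
  next
    assume "Aev n {e\<in>Fn n. \<omega> e}"
    then obtain y where y: "cn V {e\<in>Fn n. \<omega> e} x y" "y \<notin> Bl n" unfolding Aev_def by blast
    have sub: "{e\<in>Fn n. \<omega> e} \<subseteq> {e\<in>E. \<omega> e}" using Fn_E by blast
    have "cn V {e\<in>E. \<omega> e} x y" using cn_mono[OF y(1) order_refl sub] .
    then show "\<exists>y. cn V {e\<in>E. \<omega> e} x y \<and> y \<notin> Bl n" using y(2) by blast
  qed
  then show ?thesis by simp
qed

lemma theta_ge:
  assumes r: "0 \<le> r" "r \<le> 1" and d: "\<forall>n. \<delta> \<le> PF (Fn n) r (Aev n)"
  shows "\<delta> \<le> Prob E r (conn_inf V E x)"
proof -
  interpret prob_space "perc E r" by (rule prob_perc)
  define A where "A n = {\<omega>\<in>space (perc E r). \<exists>y. cn V {e\<in>E. \<omega> e} x y \<and> y \<notin> Bl n}" for n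
  have As: "A n \<in> sets (perc E r)" for n
    unfolding A_def Sn_eq by (intro bridge_sets Fn_finite Fn_E)
  have Am: "measure (perc E r) (A n) = PF (Fn n) r (Aev n)" for n
    unfolding A_def Sn_eq using r by (intro bridge Fn_finite Fn_E) auto
  have dec: "decseq A"
    unfolding decseq_def A_def using Bl_mono by blast
  have "(\<lambda>n. measure (perc E r) (A n)) \<longlonglongrightarrow> measure (perc E r) (\<Inter>i. A i)"
    using As dec by (intro finite_Lim_measure_decseq) auto
  moreover have "(\<Inter>i. A i) = {\<omega>\<in>space (perc E r). conn_inf V E x \<omega>}"
    unfolding A_def conn_inf_iff by blast
  ultimately have "(\<lambda>n. PF (Fn n) r (Aev n)) \<longlonglongrightarrow> Prob E r (conn_inf V E x)"
    unfolding Prob_def Am by simp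
  then show ?thesis using d by (intro LIMSEQ_le_const) auto
qed

lemma theta_one: "0 < Prob E r (conn_inf V E x)" if "1 \<le> r"
proof -
  have "Aev n (Fn n)" for n
  proof -
    obtain y where y: "y \<in> V" "y \<notin> Bl n" using far_vertex by blast
    from cn_prefix[OF cn_V_E[OF y(1)] x_Lam y(2)]
    obtain y' where "y' \<notin> Bl n" "cn V (E \<inter> ES (Bl (Suc n))) x y'" by blast
    moreover have "E \<inter> ES (Bl (Suc n)) = Fn n" using Fn_E unfolding Fn_def by blast
    ultimately show ?thesis unfolding Aev_def by auto
  qed
  then have "\<forall>n. 1 \<le> PF (Fn n) 1 (Aev n)" using Fn_finite by (simp add: PF_one)
  then have "1 \<le> Prob E 1 (conn_inf V E x)" by (intro theta_ge) auto
  moreover have "Prob E r (conn_inf V E x) = Prob E 1 (conn_inf V E x)"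
    unfolding Prob_def using perc_clamp[OF that] by simp
  ultimately show ?thesis by simp
qed

lemma dct:
  assumes pq: "0 \<le> p" "p < q" "q \<le> 1" and c: "0 < c"
    and hyp: "\<forall>S. conn_set V E x S \<longrightarrow> c \<le> (\<Sum>e\<in>eb S. p * psi p S e)"
  shows "0 < Prob E q (conn_inf V E x)"
proof -
  have "c * (q - p) / (1 + c * (q - p)) \<le> Prob E q (conn_inf V E x)"
    using theta_n_lb[OF pq c hyp] pq by (intro theta_ge) auto
  moreover have "0 < c * (q - p) / (1 + c * (q - p))" using c pq by (simp add: add_pos_nonneg)
  ultimately show ?thesis by linarith
qed

end

lemma sup_eq_aux:
  fixes X Y :: "real set"
  assumes XY: "X \<subseteq> Y" and X0: "0 \<in> X" and Y1: "\<forall>y\<in>Y. y < 1"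
    and low: "\<forall>p. 0 \<le> p \<longrightarrow> p < Sup Y \<longrightarrow> p \<in> X"
  shows "Sup X = Sup Y"
proof -
  have bY: "bdd_above Y" using Y1 by (meson bdd_above.unfold less_imp_le)
  have bX: "bdd_above X" using bdd_above_mono[OF bY XY] .
  have neX: "X \<noteq> {}" using X0 by blast
  have le: "Sup X \<le> Sup Y" using neX bY XY by (rule cSup_subset_mono)
  have X0le: "0 \<le> Sup X" using X0 bX by (rule cSup_upper)
  show ?thesis
  proof (rule ccontr)
    assume "Sup X \<noteq> Sup Y"
    then have lt: "Sup X < Sup Y" using le by simp
    define p where "p = (Sup X + Sup Y) / 2"
    have "0 \<le> p" "p < Sup Y" using lt X0le unfolding p_def by auto
    then have "p \<in> X" using low by blast
    then have "p \<le> Sup X" using bX by (rule cSup_upper)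
    then show False using lt unfolding p_def by simp
  qed
qed

context pg begin

lemma Xc_lt1: "0 \<le> p \<Longrightarrow> Prob E p (conn_inf V E x) = 0 \<Longrightarrow> p < 1"
  using theta_one[of p] by (cases "1 \<le> p") auto

lemma enn_zero: "ennreal (t::real) \<le> 0 \<Longrightarrow> 0 \<le> t \<Longrightarrow> t = 0"
  by (simp add: ennreal_le_iff2 order_antisym)

lemma theta0_v: "(INF C\<in>{C. vertex_cutset V E x C}. vsum V E x p C) = 0 \<Longrightarrow> Prob E p (conn_inf V E x) = 0"
proof -
  assume h: "(INF C\<in>{C. vertex_cutset V E x C}. vsum V E x p C) = 0"
  have "ennreal (Prob E p (conn_inf V E x)) \<le> (INF C\<in>{C. vertex_cutset V E x C}. vsum V E x p C)"
    by (rule INF_greatest) (simp add: theta_le_vsum)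
  then show ?thesis using h Prob_nonneg enn_zero by simp
qed

lemma theta0_e: "(INF C\<in>{C. edge_cutset V E x C}. esum V E x p C) = 0 \<Longrightarrow> Prob E p (conn_inf V E x) = 0"
proof -
  assume h: "(INF C\<in>{C. edge_cutset V E x C}. esum V E x p C) = 0"
  have "ennreal (Prob E p (conn_inf V E x)) \<le> (INF C\<in>{C. edge_cutset V E x C}. esum V E x p C)"
    by (rule INF_greatest) (simp add: theta_le_esum)
  then show ?thesis using h Prob_nonneg enn_zero by simp
qed

lemma BV_sub: "B_V V E x \<subseteq> {C. vertex_cutset V E x C}"
  unfolding B_V_def using vb_cutset by blast

lemma BE_sub: "B_E V E x \<subseteq> {C. edge_cutset V E x C}"
  unfolding B_E_def using eb_cutset by blast

lemma V1_of_V2: "(INF C\<in>B_V V E x. vsum V E x p C) = 0 \<Longrightarrow> (INF C\<in>{C. vertex_cutset V E x C}. vsum V E x p C) = 0"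
proof -
  assume h: "(INF C\<in>B_V V E x. vsum V E x p C) = 0"
  have "(INF C\<in>{C. vertex_cutset V E x C}. vsum V E x p C) \<le> (INF C\<in>B_V V E x. vsum V E x p C)"
    using BV_sub by (rule INF_superset_mono) simp
  then show ?thesis using h by simp
qed

lemma E1_of_E2: "(INF C\<in>B_E V E x. esum V E x p C) = 0 \<Longrightarrow> (INF C\<in>{C. edge_cutset V E x C}. esum V E x p C) = 0"
proof -
  assume h: "(INF C\<in>B_E V E x. esum V E x p C) = 0"
  have "(INF C\<in>{C. edge_cutset V E x C}. esum V E x p C) \<le> (INF C\<in>B_E V E x. esum V E x p C)"
    using BE_sub by (rule INF_superset_mono) simp
  then show ?thesis using h by simp
qed

lemma V2_of_E2: "(INF C\<in>B_E V E x. esum V E x p C) = 0 \<Longrightarrow> (INF C\<in>B_V V E x. vsum V E x p C) = 0"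
proof -
  assume h: "(INF C\<in>B_E V E x. esum V E x p C) = 0"
  have "(INF C\<in>B_V V E x. vsum V E x p C) \<le> (INF C\<in>B_E V E x. esum V E x p C)"
  proof (rule INF_greatest)
    fix C assume "C \<in> B_E V E x"
    then obtain S where S: "C = eb S" "conn_set V E x S" unfolding B_E_def by blast
    have "vb S \<in> B_V V E x" unfolding B_V_def using S(2) by blast
    then have "(INF C\<in>B_V V E x. vsum V E x p C) \<le> vsum V E x p (vb S)" by (rule INF_lower)
    also have "\<dots> \<le> esum V E x p (eb S)" using S(2) by (rule vsum_le_esum)
    finally show "(INF C\<in>B_V V E x. vsum V E x p C) \<le> esum V E x p C" using S(1) by simp
  qed
  then show ?thesis using h by simp
qed

lemma conn_set_x: "conn_set V E x {x}"
  unfolding conn_set_iff using xV by (auto intro: cn_refl)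

lemma E2_zero: "(INF C\<in>B_E V E x. esum V E x 0 C) = 0"
proof -
  have "eb {x} \<in> B_E V E x" unfolding B_E_def using conn_set_x by blast
  then have "(INF C\<in>B_E V E x. esum V E x 0 C) \<le> esum V E x 0 (eb {x})" by (rule INF_lower)
  also have "\<dots> = 0" using esum_eb[of "{x}" 0] xV by simp
  finally show ?thesis by simp
qed

lemma main_sharp:
  assumes p: "0 \<le> p" "p < q" and q: "Prob E q (conn_inf V E x) = 0"
  shows "(INF C\<in>B_E V E x. esum V E x p C) = 0"
proof (rule ccontr)
  let ?m = "INF C\<in>B_E V E x. esum V E x p C"
  assume "?m \<noteq> 0"
  then have m0: "0 < ?m" by (simp add: zero_less_iff_neq_zero)
  have q1: "q < 1" using Xc_lt1[OF _ q] p by simp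
  define c where "c = enn2real (min ?m 1)"
  have m1: "min ?m 1 \<le> 1" by (rule min.cobounded2)
  have mt: "min ?m 1 \<noteq> top"
  proof
    assume "min ?m 1 = top"
    then have "top \<le> (1::ennreal)" using m1 by simp
    then show False by (simp add: top_unique)
  qed
  have mpos: "0 < min ?m 1" using m0 by simp
  have cpos: "0 < c" unfolding c_def using mt mpos by (simp add: enn2real_positive_iff top.not_eq_extremum)
  have cm: "ennreal c \<le> ?m" unfolding c_def using mt by (simp add: ennreal_enn2real_if)
  have hyp: "\<forall>S. conn_set V E x S \<longrightarrow> c \<le> (\<Sum>e\<in>eb S. p * psi p S e)"
  proof (intro allI impI)
    fix S assume S: "conn_set V E x S"
    then have S': "finite S" "x \<in> S" "S \<subseteq> V" using conn_set_iff by auto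
    have "eb S \<in> B_E V E x" unfolding B_E_def using S by blast
    then have "?m \<le> esum V E x p (eb S)" by (rule INF_lower)
    also have "\<dots> = ennreal (\<Sum>e\<in>eb S. p * psi p S e)" using esum_eb[OF S'] p q1 by simp
    finally have "ennreal c \<le> ennreal (\<Sum>e\<in>eb S. p * psi p S e)" using cm by simp
    moreover have "0 \<le> (\<Sum>e\<in>eb S. p * psi p S e)"
      using p q1 psi_nonneg by (intro sum_nonneg mult_nonneg_nonneg) auto
    ultimately show "c \<le> (\<Sum>e\<in>eb S. p * psi p S e)" by (simp add: ennreal_le_iff)
  qed
  have "0 < Prob E q (conn_inf V E x)" using dct[OF p(1) p(2) _ cpos hyp] q1 by simp
  then show False using q by simp
qed

end

theorem theorem2p9:
  fixes V :: "'v set" and E :: "'v set set" and x :: 'v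
  assumes "simple_graph V E"
    and "locally_finite V E"
    and "connected_graph V E"
    and "infinite V"
    and "x \<in> V"
  shows "p''_cut_E V E x = p'_cut_E V E x \<and> p'_cut_E V E x = p''_cut_V V E x \<and>
         p''_cut_V V E x = p'_cut_V V E x \<and> p'_cut_V V E x = p_c V E x"
proof -
  interpret pg V E x using assms by unfold_locales
  define Xc where "Xc = {p. 0 \<le> p \<and> Prob E p (conn_inf V E x) = 0}"
  define X1V where "X1V = {p. 0 \<le> p \<and> (INF C\<in>{C. vertex_cutset V E x C}. vsum V E x p C) = 0}"
  define X1E where "X1E = {p. 0 \<le> p \<and> (INF C\<in>{C. edge_cutset V E x C}. esum V E x p C) = 0}"
  define X2V where "X2V = {p. 0 \<le> p \<and> (INF C\<in>B_V V E x. vsum V E x p C) = 0}"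
  define X2E where "X2E = {p. 0 \<le> p \<and> (INF C\<in>B_E V E x. esum V E x p C) = 0}"
  have c1: "\<forall>y\<in>Xc. y < 1" unfolding Xc_def using Xc_lt1 by blast
  have s1: "X1V \<subseteq> Xc" unfolding X1V_def Xc_def using theta0_v by blast
  have s2: "X1E \<subseteq> Xc" unfolding X1E_def Xc_def using theta0_e by blast
  have s3: "X2V \<subseteq> X1V" unfolding X2V_def X1V_def using V1_of_V2 by blast
  have s4: "X2E \<subseteq> X1E" unfolding X2E_def X1E_def using E1_of_E2 by blast
  have s5: "X2E \<subseteq> X2V" unfolding X2E_def X2V_def using V2_of_E2 by blast
  have z: "0 \<in> X2E" unfolding X2E_def using E2_zero by simp
  have low: "\<forall>p. 0 \<le> p \<longrightarrow> p < Sup Xc \<longrightarrow> p \<in> X2E"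
  proof (intro allI impI)
    fix p assume p: "0 \<le> p" "p < Sup Xc"
    have ne: "Xc \<noteq> {}" using z s4 s2 by blast
    have bd: "bdd_above Xc" using c1 by (meson bdd_above.unfold less_imp_le)
    obtain q where "q \<in> Xc" "p < q" using p(2) less_cSup_iff[OF ne bd] by blast
    then have "(INF C\<in>B_E V E x. esum V E x p C) = 0" using main_sharp[OF p(1)] unfolding Xc_def by blast
    then show "p \<in> X2E" unfolding X2E_def using p by blast
  qed
  have e2E: "Sup X2E = Sup Xc" using s4 s2 z c1 low by (intro sup_eq_aux) blast+
  have e1E: "Sup X1E = Sup Xc" using s2 z s4 c1 low by (intro sup_eq_aux) blast+
  have e2V: "Sup X2V = Sup Xc" using s3 s1 z s5 c1 low by (intro sup_eq_aux) blast+
  have e1V: "Sup X1V = Sup Xc" using s1 z s5 s3 c1 low by (intro sup_eq_aux) blast+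
  have "p''_cut_E V E x = Sup X2E" unfolding p''_cut_E_def X2E_def ..
  moreover have "p'_cut_E V E x = Sup X1E" unfolding p'_cut_E_def X1E_def ..
  moreover have "p''_cut_V V E x = Sup X2V" unfolding p''_cut_V_def X2V_def ..
  moreover have "p'_cut_V V E x = Sup X1V" unfolding p'_cut_V_def X1V_def ..
  moreover have "p_c V E x = Sup Xc" unfolding p_c_def Xc_def ..
  ultimately show ?thesis using e2E e1E e2V e1V by simp
qed

end
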